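(* Assume the row-sums and column-sums of $A$ all equal $d\ge2$. Let $(e_n)_{n\ge1}$ be an enumeration of the orthonormal eigenbasis $\{\mathrm e_\gamma\}\cup\{\mathrm e_{(\gamma,\nu,j)}\}$ of $L^2(G_A,\mu_{G_A})$ described in the context, ordered so that the corresponding eigenvalues of $|D|$ are non-decreasing, and let $\rho_n(a)=\langle e_n,ae_n\rangle_{L^2(G_A,\mu_{G_A})}$ for $a\in O_A$. Then there is no density one subsequence $(n_k)_k$ of $\mathbb N$ (i.e. strictly increasing with $\#\{k:n_k\le M\}/M\to1$) along which $(\rho_{n_k})_k$ converges in the weak$^*$ topology.
   Context: $A\in M_N(\{0,1\})$ primitive; $V_A$ admissible finite words ($x_1\cdots x_k$ with $A_{x_n,x_{n+1}}=1$), $\emptyset$ empty word, $|\alpha|$ length, $\beta V_A$ words starting with $\beta$; $\Omega_A$ infinite admissible sequences, shift $\sigma$, cylinders $C(\alpha)$. $\lambda_A$ Perron–Frobenius eigenvalue, $u>0$, $Au=\lambda_Au$, $\sum u_i=1$; $P_{i,j}=A_{i,j}u_j/(\lambda_Au_i)$; $\mathfrak C(i)=\{j:A_{i,j}=1\}$, $\mathfrak c(i)=\#\mathfrak C(i)$; $F_A(x)=u_{x_1}(1-P_{x_1,x_2})$, $t_c=\lambda_A^{-1}\sup_\tau h_\tau/\tau(F_A)$ (sup over $\sigma$-invariant ergodic probability measures, $h_\tau$ entropy). $\mu_c(C(\alpha_1\cdots\alpha_n))=u_{\alpha_n}\lambda_A^{-(n-1)}$; fix $\lambda>1$, $d(x,y)=\lambda^{-\inf\{n-1:x_n\ne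 y_n\}}$; $\Delta_{C(\beta)}$ ($\beta\ne\emptyset$) is the self-adjoint operator on $L^2(C(\beta),\mu_c)$ given on locally constant $f$ by $\Delta_{C(\beta)}f(x)=\int_{C(\beta)}\frac{f(x)-f(y)}{d(x,y)^{\log_\lambda\lambda_A}}d\mu_c(y)$. $G_A=\{(x,n,y)\in\Omega_A\times\mathbb Z\times\Omega_A:\exists k\ge0,n+k\ge0,\sigma^{n+k}x=\sigma^ky\}$, Deaconu–Renault étale groupoid ($r(x,n,y)=x$, $s(x,n,y)=y$). $\kappa(x,n,y)=\min\{k\ge\max(0,-n):\sigma^{n+k}x=\sigma^ky\}$. $I_A$: pairs $\gamma=\alpha.\beta$, $\alpha\in V_A$, $\beta\ne\emptyset$, with $\alpha=\emptyset$ or ($A_{\alpha_{|\alpha|},\beta_{|\beta|}}=1$, $\alpha_{|\alpha|}\ne\beta_{|\beta|-1}$, vacuous if $|\beta|=1$); $r(\gamma)=\alpha$, $s(\gamma)=\beta$. $G_\gamma=\{(x,n,y):y\in C(\beta),x=\alpha\sigma^{|\beta|-1}y,n=|\alpha|-|\beta|+1,\kappa=|\beta|-1\}$, $G_A=\bigsqcup G_\gamma$, $s_\gamma=s|_{G_\gamma}$ homeomorphism onto $C(\beta)$, $\mu_\gamma(B)=\mu_c(s_\gamma B)$, $\mu_{G_A}$ equal to $\mu_\gamma$ on $G_\gamma$. $\Delta=\bigoplus\Delta_\gamma$, $\Delta_\gamma$ the transport of $\Delta_{C(s(\gamma))}$ via $f\mapsto f\circ s_\gamma$. $L|_{G_\gamma}=\frac{\log\lambda_A}{t_c}(|r(\gamma)|+|s(\gamma)|)$,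 $P_A$ projection onto closed span of $\{\chi_{G_\gamma}:|s(\gamma)|=1\}$, $D=-\Delta+(2P_A-1)M_L$, $|D|=\Delta+M_L$. Eigenbasis: for $\gamma\in I_A$, $\mathrm e_\gamma=\mu_c(C(s(\gamma)))^{-1/2}\chi_{G_\gamma}$; for $\nu\in s(\gamma)V_A$ with $\mathfrak c(\nu_{|\nu|})\ge2$ and $1\le j\le\mathfrak c(\nu_{|\nu|})-1$, $\mathrm e_{(\gamma,\nu,j)}=h_{\nu,j}\circ s_\gamma$ on $G_\gamma$ (zero elsewhere), where, for a chosen bijection $\iota_\nu:\{1,\dots,\mathfrak c(\nu_{|\nu|})\}\to\mathfrak C(\nu_{|\nu|})$, $q_m=\sum_{k\le m}P_{\nu_{|\nu|},\iota_\nu(k)}$, $h_{\nu,j}=\sum_ka^{(\nu,j)}_k\chi_{C(\nu\iota_\nu(k))}$ with $a^{(\nu,j)}_k=(P_{\nu_{|\nu|},\iota_\nu(j+1)}/(\mu_c(C(\nu))q_jq_{j+1}))^{1/2}$ for $k\le j$, $a^{(\nu,j)}_{j+1}=-(q_j/(\mu_c(C(\nu))q_{j+1}P_{\nu_{|\nu|},\iota_\nu(j+1)}))^{1/2}$, and $0$ for $k\ge j+2$. These form an orthonormal basis of eigenvectors of $|D|$. $O_A$ is the universal C*-algebra generated by $S_1,\dots,S_N$ with $\sum S_iS_i^*=1$, $S_i^*S_k=\delta_{ik}\sum_jA_{ij}S_jS_j^*$, identified with $C^*_r(G_A)$ via $S_i\mapsto$ characteristic function of $\{(x,1,\sigma x):x\in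 C(i)\}$, acting on $L^2(G_A,\mu_{G_A})$ by left convolution $(f\xi)(g)=\sum_{r(h)=r(g)}f(h)\xi(h^{-1}g)$. *)

theory Defs
  imports "HOL-Probability.Probability"
begin

(* Conventions: the alphabet {1..N} of the paper is rendered as {0..<N};
   finite words are lists, infinite sequences are functions nat => nat
   (position 0 = first letter). The matrix A is a function nat => nat => nat
   whose entries (for indices < N) are 0 or 1. *)

definition adm :: "nat \<Rightarrow> (nat \<Rightarrow> nat \<Rightarrow> nat) \<Rightarrow> nat list \<Rightarrow> bool" where
  "adm N A w \<longleftrightarrow> (\<forall>i<length w. w ! i < N) \<and> (\<forall>i. Suc i < length w \<longrightarrow> A (w ! i) (w ! Suc i) = 1)"

definition OmegaA :: "nat \<Rightarrow> (nat \<Rightarrow> nat \<Rightarrow> nat) \<Rightarrow> (nat \<Rightarrow> nat) set" where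
  "OmegaA N A = {x. (\<forall>n. x n < N) \<and> (\<forall>n. A (x n) (x (Suc n)) = 1)}"

definition shiftk :: "nat \<Rightarrow> (nat \<Rightarrow> nat) \<Rightarrow> (nat \<Rightarrow> nat)" where
  "shiftk k x = (\<lambda>n. x (n + k))"

definition shift1 :: "(nat \<Rightarrow> nat) \<Rightarrow> (nat \<Rightarrow> nat)" where
  "shift1 = shiftk 1"

definition cyl :: "nat \<Rightarrow> (nat \<Rightarrow> nat \<Rightarrow> nat) \<Rightarrow> nat list \<Rightarrow> (nat \<Rightarrow> nat) set" where
  "cyl N A \<alpha> = {x \<in> OmegaA N A. \<forall>i<length \<alpha>. x i = \<alpha> ! i}"

definition prep :: "nat list \<Rightarrow> (nat \<Rightarrow> nat) \<Rightarrow> (nat \<Rightarrow> nat)" where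
  "prep \<alpha> z = (\<lambda>n. if n < length \<alpha> then \<alpha> ! n else z (n - length \<alpha>))"

fun Apow :: "nat \<Rightarrow> (nat \<Rightarrow> nat \<Rightarrow> nat) \<Rightarrow> nat \<Rightarrow> nat \<Rightarrow> nat \<Rightarrow> nat" where
  "Apow N A 0 i j = (if i = j then 1 else 0)"
| "Apow N A (Suc k) i j = (\<Sum>l<N. Apow N A k i l * A l j)"

definition primitive :: "nat \<Rightarrow> (nat \<Rightarrow> nat \<Rightarrow> nat) \<Rightarrow> bool" where
  "primitive N A \<longleftrightarrow> N \<ge> 1 \<and> (\<exists>k>0. \<forall>i<N. \<forall>j<N. Apow N A k i j > 0)"

definition lamA :: "nat \<Rightarrow> (nat \<Rightarrow> nat \<Rightarrow> nat) \<Rightarrow> real" where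
  "lamA N A = (THE l. l > 0 \<and> (\<exists>u::nat \<Rightarrow> real. (\<forall>i<N. u i > 0) \<and>
       (\<forall>i<N. (\<Sum>j<N. real (A i j) * u j) = l * u i)))"

definition uvec :: "nat \<Rightarrow> (nat \<Rightarrow> nat \<Rightarrow> nat) \<Rightarrow> nat \<Rightarrow> real" where
  "uvec N A = (THE u. (\<forall>i<N. u i > 0) \<and> (\<forall>i\<ge>N. u i = 0) \<and> (\<Sum>i<N. u i) = 1 \<and>
       (\<forall>i<N. (\<Sum>j<N. real (A i j) * u j) = lamA N A * u i))"

definition Pm :: "nat \<Rightarrow> (nat \<Rightarrow> nat \<Rightarrow> nat) \<Rightarrow> nat \<Rightarrow> nat \<Rightarrow> real" where
  "Pm N A i j = real (A i j) * uvec N A j / (lamA N A * uvec N A i)"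

definition Cset :: "nat \<Rightarrow> (nat \<Rightarrow> nat \<Rightarrow> nat) \<Rightarrow> nat \<Rightarrow> nat set" where
  "Cset N A i = {j. j < N \<and> A i j = 1}"

definition cc :: "nat \<Rightarrow> (nat \<Rightarrow> nat \<Rightarrow> nat) \<Rightarrow> nat \<Rightarrow> nat" where
  "cc N A i = card (Cset N A i)"

(* Borel sigma-algebra of Omega_A (product topology), as a measurable space *)
definition MOmega :: "nat \<Rightarrow> (nat \<Rightarrow> nat \<Rightarrow> nat) \<Rightarrow> (nat \<Rightarrow> nat) measure" where
  "MOmega N A = restrict_space (PiM UNIV (\<lambda>_::nat. count_space (UNIV::nat set))) (OmegaA N A)"

definition muc :: "nat \<Rightarrow> (nat \<Rightarrow> nat \<Rightarrow> nat) \<Rightarrow> (nat \<Rightarrow> nat) measure" where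
  "muc N A = (SOME M. sets M = sets (MOmega N A) \<and> emeasure M (space M) = 1 \<and>
     (\<forall>\<alpha>. adm N A \<alpha> \<and> \<alpha> \<noteq> [] \<longrightarrow>
        emeasure M (cyl N A \<alpha>) = ennreal (uvec N A (last \<alpha>) / lamA N A ^ (length \<alpha> - 1))))"

definition FA :: "nat \<Rightarrow> (nat \<Rightarrow> nat \<Rightarrow> nat) \<Rightarrow> (nat \<Rightarrow> nat) \<Rightarrow> real" where
  "FA N A x = uvec N A (x 0) * (1 - Pm N A (x 0) (x 1))"

definition inv_ergodic :: "nat \<Rightarrow> (nat \<Rightarrow> nat \<Rightarrow> nat) \<Rightarrow> (nat \<Rightarrow> nat) measure \<Rightarrow> bool" where
  "inv_ergodic N A \<tau> \<longleftrightarrow> sets \<tau> = sets (MOmega N A) \<and> prob_space \<tau> \<and>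
     (\<forall>B\<in>sets \<tau>. emeasure \<tau> (shift1 -` B \<inter> space \<tau>) = emeasure \<tau> B) \<and>
     (\<forall>B\<in>sets \<tau>. shift1 -` B \<inter> space \<tau> = B \<longrightarrow> emeasure \<tau> B = 0 \<or> emeasure \<tau> B = 1)"

definition meas_partition :: "'a measure \<Rightarrow> 'a set set \<Rightarrow> bool" where
  "meas_partition \<tau> P \<longleftrightarrow> finite P \<and> P \<subseteq> sets \<tau> \<and> \<Union>P = space \<tau> \<and> disjoint P"

definition part_entropy :: "'a measure \<Rightarrow> 'a set set \<Rightarrow> real" where
  "part_entropy \<tau> P = - (\<Sum>B\<in>P. measure \<tau> B * ln (measure \<tau> B))"

definition join_part :: "(nat \<Rightarrow> nat) measure \<Rightarrow> (nat \<Rightarrow> nat) set set \<Rightarrow> nat \<Rightarrow> (nat \<Rightarrow> nat) set set" where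
  "join_part \<tau> P n = {(\<Inter>i<n. shiftk i -` f i) \<inter> space \<tau> | f. \<forall>i<n. f i \<in> P}"

definition ks_entropy_part :: "(nat \<Rightarrow> nat) measure \<Rightarrow> (nat \<Rightarrow> nat) set set \<Rightarrow> real" where
  "ks_entropy_part \<tau> P = lim (\<lambda>n. part_entropy \<tau> (join_part \<tau> P (Suc n)) / real (Suc n))"

definition ks_entropy :: "(nat \<Rightarrow> nat) measure \<Rightarrow> real" where
  "ks_entropy \<tau> = Sup {ks_entropy_part \<tau> P | P. meas_partition \<tau> P}"

definition tc :: "nat \<Rightarrow> (nat \<Rightarrow> nat \<Rightarrow> nat) \<Rightarrow> real" where
  "tc N A = (1 / lamA N A) * Sup {ks_entropy \<tau> / (\<integral>x. FA N A x \<partial>\<tau>) | \<tau>. inv_ergodic N A \<tau>}"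

type_synonym gel = "(nat \<Rightarrow> nat) \<times> int \<times> (nat \<Rightarrow> nat)"

definition GA :: "nat \<Rightarrow> (nat \<Rightarrow> nat \<Rightarrow> nat) \<Rightarrow> gel set" where
  "GA N A = {(x, n, y). x \<in> OmegaA N A \<and> y \<in> OmegaA N A \<and>
      (\<exists>k::nat. n + int k \<ge> 0 \<and> shiftk (nat (n + int k)) x = shiftk k y)}"

definition kappa :: "gel \<Rightarrow> nat" where
  "kappa g = (case g of (x, n, y) \<Rightarrow>
      (LEAST k::nat. int k \<ge> max 0 (- n) \<and> shiftk (nat (n + int k)) x = shiftk k y))"

definition gmul :: "gel \<Rightarrow> gel \<Rightarrow> gel" where
  "gmul g h = (case g of (x, n, _) \<Rightarrow> (case h of (_, m, z) \<Rightarrow> (x, n + m, z)))"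

definition ginv :: "gel \<Rightarrow> gel" where
  "ginv g = (case g of (x, n, y) \<Rightarrow> (y, - n, x))"

definition src :: "gel \<Rightarrow> (nat \<Rightarrow> nat)" where
  "src g = snd (snd g)"

definition IA :: "nat \<Rightarrow> (nat \<Rightarrow> nat \<Rightarrow> nat) \<Rightarrow> (nat list \<times> nat list) set" where
  "IA N A = {(\<alpha>, \<beta>). adm N A \<alpha> \<and> adm N A \<beta> \<and> \<beta> \<noteq> [] \<and>
      (\<alpha> = [] \<or> (A (last \<alpha>) (last \<beta>) = 1 \<and> (length \<beta> = 1 \<or> last \<alpha> \<noteq> \<beta> ! (length \<beta> - 2))))}"

definition Gg :: "nat \<Rightarrow> (nat \<Rightarrow> nat \<Rightarrow> nat) \<Rightarrow> nat list \<times> nat list \<Rightarrow> gel set" where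
  "Gg N A \<gamma> = (case \<gamma> of (\<alpha>, \<beta>) \<Rightarrow>
      {(x, n, y). y \<in> cyl N A \<beta> \<and> x = prep \<alpha> (shiftk (length \<beta> - 1) y) \<and>
         n = int (length \<alpha>) - int (length \<beta>) + 1 \<and> kappa (x, n, y) = length \<beta> - 1})"

definition sinv :: "nat list \<times> nat list \<Rightarrow> (nat \<Rightarrow> nat) \<Rightarrow> gel" where
  "sinv \<gamma> y = (case \<gamma> of (\<alpha>, \<beta>) \<Rightarrow>
      (prep \<alpha> (shiftk (length \<beta> - 1) y), int (length \<alpha>) - int (length \<beta>) + 1, y))"

section \<open>L^2(G_A, mu_{G_A}): integration against mu_{G_A} = sum over pieces of mu_gamma\<close>

definition norm2sq :: "nat \<Rightarrow> (nat \<Rightarrow> nat \<Rightarrow> nat) \<Rightarrow> (gel \<Rightarrow> complex) \<Rightarrow> ennreal" where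
  "norm2sq N A f = (\<integral>\<^sup>+\<gamma>. (\<integral>\<^sup>+y. indicator (cyl N A (snd \<gamma>)) y * ennreal ((cmod (f (sinv \<gamma> y)))\<^sup>2)
        \<partial>muc N A) \<partial>count_space (IA N A))"

definition L2 :: "nat \<Rightarrow> (nat \<Rightarrow> nat \<Rightarrow> nat) \<Rightarrow> (gel \<Rightarrow> complex) \<Rightarrow> bool" where
  "L2 N A f \<longleftrightarrow> (\<forall>\<gamma>\<in>IA N A. (\<lambda>y. indicator (cyl N A (snd \<gamma>)) y * f (sinv \<gamma> y)) \<in> borel_measurable (muc N A))
      \<and> norm2sq N A f < \<infinity>"

definition inner_G :: "nat \<Rightarrow> (nat \<Rightarrow> nat \<Rightarrow> nat) \<Rightarrow> (gel \<Rightarrow> complex) \<Rightarrow> (gel \<Rightarrow> complex) \<Rightarrow> complex" where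
  "inner_G N A f h = (\<integral>\<gamma>. (\<integral>y. indicator (cyl N A (snd \<gamma>)) y * (cnj (f (sinv \<gamma> y)) * h (sinv \<gamma> y))
        \<partial>muc N A) \<partial>count_space (IA N A))"

section \<open>O_A acting on L^2(G_A) by left convolution\<close>

definition conv :: "nat \<Rightarrow> (nat \<Rightarrow> nat \<Rightarrow> nat) \<Rightarrow> (gel \<Rightarrow> complex) \<Rightarrow> (gel \<Rightarrow> complex) \<Rightarrow> gel \<Rightarrow> complex" where
  "conv N A f \<xi> g = (\<Sum>\<^sub>\<infinity>h\<in>{h \<in> GA N A. fst h = fst g}. f h * \<xi> (gmul (ginv h) g))"

(* True: S_i (char. function of {(x,1,sigma x) : x in C(i)}); False: S_i^* = its involution *)
definition genset :: "nat \<Rightarrow> (nat \<Rightarrow> nat \<Rightarrow> nat) \<Rightarrow> bool \<Rightarrow> nat \<Rightarrow> gel set" where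
  "genset N A b i = (if b then {(x, 1, shift1 x) | x. x \<in> cyl N A [i]}
                         else {(shift1 x, -1, x) | x. x \<in> cyl N A [i]})"

definition genact :: "nat \<Rightarrow> (nat \<Rightarrow> nat \<Rightarrow> nat) \<Rightarrow> bool \<Rightarrow> nat \<Rightarrow> (gel \<Rightarrow> complex) \<Rightarrow> gel \<Rightarrow> complex" where
  "genact N A b i \<xi> = conv N A (indicator (genset N A b i)) \<xi>"

fun wordact :: "nat \<Rightarrow> (nat \<Rightarrow> nat \<Rightarrow> nat) \<Rightarrow> (bool \<times> nat) list \<Rightarrow> (gel \<Rightarrow> complex) \<Rightarrow> gel \<Rightarrow> complex" where
  "wordact N A [] \<xi> = \<xi>"
| "wordact N A ((b, i) # w) \<xi> = genact N A b i (wordact N A w \<xi>)"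

(* a non-commutative *-polynomial in the S_i: linear combination of words *)
definition polyact :: "nat \<Rightarrow> (nat \<Rightarrow> nat \<Rightarrow> nat) \<Rightarrow> (complex \<times> (bool \<times> nat) list) list \<Rightarrow> (gel \<Rightarrow> complex) \<Rightarrow> gel \<Rightarrow> complex" where
  "polyact N A p \<xi> = (\<lambda>g. \<Sum>(c, w)\<leftarrow>p. c * wordact N A w \<xi> g)"

(* O_A (= C*_r(G_A)) as the operator-norm closure of the *-polynomials in the S_i on L^2(G_A) *)
definition OA :: "nat \<Rightarrow> (nat \<Rightarrow> nat \<Rightarrow> nat) \<Rightarrow> ((gel \<Rightarrow> complex) \<Rightarrow> (gel \<Rightarrow> complex)) set" where
  "OA N A = {T. (\<forall>\<xi>. L2 N A \<xi> \<longrightarrow> L2 N A (T \<xi>)) \<and>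
      (\<forall>\<epsilon>>0. \<exists>p. \<forall>\<xi>. L2 N A \<xi> \<longrightarrow>
          norm2sq N A (\<lambda>g. T \<xi> g - polyact N A p \<xi> g) \<le> ennreal (\<epsilon>\<^sup>2) * norm2sq N A \<xi>)}"

section \<open>The operator |D| = Delta + M_L\<close>

definition dmet :: "real \<Rightarrow> (nat \<Rightarrow> nat) \<Rightarrow> (nat \<Rightarrow> nat) \<Rightarrow> real" where
  "dmet lam x y = (if x = y then 0 else lam powr (- real (LEAST m. x m \<noteq> y m)))"

definition Lval :: "nat \<Rightarrow> (nat \<Rightarrow> nat \<Rightarrow> nat) \<Rightarrow> nat list \<times> nat list \<Rightarrow> real" where
  "Lval N A \<gamma> = ln (lamA N A) / tc N A * real (length (fst \<gamma>) + length (snd \<gamma>))"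

(* (Delta_gamma f)(g) for g in G_gamma: transport of Delta_{C(beta)} via s_gamma *)
definition Delta_piece :: "nat \<Rightarrow> (nat \<Rightarrow> nat \<Rightarrow> nat) \<Rightarrow> real \<Rightarrow> nat list \<times> nat list \<Rightarrow> (gel \<Rightarrow> complex) \<Rightarrow> gel \<Rightarrow> complex" where
  "Delta_piece N A lam \<gamma> f g = (\<integral>y. indicator (cyl N A (snd \<gamma>)) y *
      ((f g - f (sinv \<gamma> y)) / complex_of_real (dmet lam (src g) y powr log lam (lamA N A))) \<partial>muc N A)"

definition piece_of :: "nat \<Rightarrow> (nat \<Rightarrow> nat \<Rightarrow> nat) \<Rightarrow> gel \<Rightarrow> nat list \<times> nat list" where
  "piece_of N A g = (THE \<gamma>. \<gamma> \<in> IA N A \<and> g \<in> Gg N A \<gamma>)"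

definition absD :: "nat \<Rightarrow> (nat \<Rightarrow> nat \<Rightarrow> nat) \<Rightarrow> real \<Rightarrow> (gel \<Rightarrow> complex) \<Rightarrow> gel \<Rightarrow> complex" where
  "absD N A lam f g = (if g \<in> GA N A then
      (let \<gamma> = piece_of N A g in Delta_piece N A lam \<gamma> f g + complex_of_real (Lval N A \<gamma>) * f g)
    else 0)"

datatype bidx = Eg "nat list \<times> nat list" | Eh "nat list \<times> nat list" "nat list" nat

definition bidx_set :: "nat \<Rightarrow> (nat \<Rightarrow> nat \<Rightarrow> nat) \<Rightarrow> bidx set" where
  "bidx_set N A = Eg ` IA N A \<union>
     {Eh \<gamma> \<nu> j | \<gamma> \<nu> j. \<gamma> \<in> IA N A \<and> adm N A \<nu> \<and> (\<exists>w. \<nu> = snd \<gamma> @ w) \<and>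
        cc N A (last \<nu>) \<ge> 2 \<and> 1 \<le> j \<and> j \<le> cc N A (last \<nu>) - 1}"

definition valid_iota :: "nat \<Rightarrow> (nat \<Rightarrow> nat \<Rightarrow> nat) \<Rightarrow> (nat list \<Rightarrow> nat \<Rightarrow> nat) \<Rightarrow> bool" where
  "valid_iota N A iota \<longleftrightarrow> (\<forall>\<nu>. adm N A \<nu> \<and> \<nu> \<noteq> [] \<longrightarrow>
      bij_betw (iota \<nu>) {1..cc N A (last \<nu>)} (Cset N A (last \<nu>)))"

definition hfun :: "nat \<Rightarrow> (nat \<Rightarrow> nat \<Rightarrow> nat) \<Rightarrow> (nat list \<Rightarrow> nat \<Rightarrow> nat) \<Rightarrow> nat list \<Rightarrow> nat \<Rightarrow> (nat \<Rightarrow> nat) \<Rightarrow> real" where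
  "hfun N A iota \<nu> j y = (let l = last \<nu>; \<iota> = iota \<nu>;
      q = (\<lambda>m. \<Sum>k=1..m. Pm N A l (\<iota> k));
      mC = measure (muc N A) (cyl N A \<nu>);
      a = (\<lambda>k. if k \<le> j then sqrt (Pm N A l (\<iota> (Suc j)) / (mC * q j * q (Suc j)))
               else if k = Suc j then - sqrt (q j / (mC * q (Suc j) * Pm N A l (\<iota> (Suc j))))
               else 0)
    in \<Sum>k=1..cc N A l. a k * indicator (cyl N A (\<nu> @ [\<iota> k])) y)"

definition ebasis :: "nat \<Rightarrow> (nat \<Rightarrow> nat \<Rightarrow> nat) \<Rightarrow> (nat list \<Rightarrow> nat \<Rightarrow> nat) \<Rightarrow> bidx \<Rightarrow> gel \<Rightarrow> complex" where
  "ebasis N A iota b g = (case b of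
      Eg \<gamma> \<Rightarrow> (if g \<in> Gg N A \<gamma> then complex_of_real (1 / sqrt (measure (muc N A) (cyl N A (snd \<gamma>)))) else 0)
    | Eh \<gamma> \<nu> j \<Rightarrow> (if g \<in> Gg N A \<gamma> then complex_of_real (hfun N A iota \<nu> j (src g)) else 0))"

definition eigval :: "nat \<Rightarrow> (nat \<Rightarrow> nat \<Rightarrow> nat) \<Rightarrow> real \<Rightarrow> (nat list \<Rightarrow> nat \<Rightarrow> nat) \<Rightarrow> bidx \<Rightarrow> real" where
  "eigval N A lam iota b = (THE \<mu>. \<forall>g\<in>GA N A.
      absD N A lam (ebasis N A iota b) g = complex_of_real \<mu> * ebasis N A iota b g)"

definition rho :: "nat \<Rightarrow> (nat \<Rightarrow> nat \<Rightarrow> nat) \<Rightarrow> (nat list \<Rightarrow> nat \<Rightarrow> nat) \<Rightarrow> (nat \<Rightarrow> bidx) \<Rightarrow> nat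
                   \<Rightarrow> ((gel \<Rightarrow> complex) \<Rightarrow> (gel \<Rightarrow> complex)) \<Rightarrow> complex" where
  "rho N A iota enum n T = inner_G N A (ebasis N A iota (enum n)) (T (ebasis N A iota (enum n)))"

end

theory Submission
  imports Defs
begin


locale regA =
  fixes N d :: nat and A :: "nat \<Rightarrow> nat \<Rightarrow> nat"
  assumes A01: "\<forall>i<N. \<forall>j<N. A i j \<in> {0, 1}"
    and prim: "primitive N A"
    and d2: "d \<ge> 2"
    and rows: "\<forall>i<N. (\<Sum>j<N. A i j) = d"
    and cols: "\<forall>j<N. (\<Sum>i<N. A i j) = d"
begin

lemma A01': "i < N \<Longrightarrow> j < N \<Longrightarrow> A i j = 0 \<or> A i j = 1"
  using A01 by auto

lemma sum_ind: "i < N \<Longrightarrow> (\<Sum>j<N. A i j) = card (Cset N A i)"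
proof -
  assume i: "i < N"
  have "(\<Sum>j<N. A i j) = (\<Sum>j<N. if A i j = 1 then 1 else 0)"
    by (rule sum.cong) (use A01' i in auto)
  also have "\<dots> = card ({..<N} \<inter> {j. A i j = 1})"
    by (simp add: sum.If_cases)
  also have "{..<N} \<inter> {j. A i j = 1} = Cset N A i" by (auto simp: Cset_def)
  finally show ?thesis .
qed

lemma card_Cset: "i < N \<Longrightarrow> card (Cset N A i) = d"
  using sum_ind rows by auto

definition Pset :: "nat \<Rightarrow> nat set" where "Pset j = {i. i < N \<and> A i j = 1}"

lemma card_Pset: "j < N \<Longrightarrow> card (Pset j) = d"
proof -
  assume j: "j < N"
  have "(\<Sum>i<N. A i j) = (\<Sum>i<N. if A i j = 1 then 1 else 0)"
    by (rule sum.cong) (use A01' j in auto)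
  also have "\<dots> = card ({..<N} \<inter> {i. A i j = 1})"
    by (simp add: sum.If_cases)
  also have "{..<N} \<inter> {i. A i j = 1} = Pset j" by (auto simp: Pset_def)
  finally show ?thesis using cols j by simp
qed

lemma Nge1: "N \<ge> 1" using prim unfolding primitive_def by auto

lemma d_le_N: "d \<le> N"
proof -
  have "card (Cset N A 0) \<le> card {..<N}" by (rule card_mono) (auto simp: Cset_def)
  thus ?thesis using card_Cset[of 0] Nge1 by auto
qed

lemma N2: "N \<ge> 2" using d_le_N d2 by auto

lemma d_pos: "d > 0" using d2 by auto

lemma lamA_eq: "lamA N A = real d"
proof -
  have ex: "real d > 0 \<and> (\<exists>u::nat \<Rightarrow> real. (\<forall>i<N. u i > 0) \<and>
       (\<forall>i<N. (\<Sum>j<N. real (A i j) * u j) = real d * u i))"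
  proof (intro conjI exI[of _ "\<lambda>_. 1"] allI impI)
    fix i assume "i < N"
    have "(\<Sum>j<N. real (A i j) * 1) = real (\<Sum>j<N. A i j)" by simp
    thus "(\<Sum>j<N. real (A i j) * 1) = real d * 1" using rows \<open>i<N\<close> by simp
  qed (use d2 in auto)
  have uniq: "l = real d" if l: "l > 0 \<and> (\<exists>u::nat \<Rightarrow> real. (\<forall>i<N. u i > 0) \<and>
       (\<forall>i<N. (\<Sum>j<N. real (A i j) * u j) = l * u i))" for l
  proof -
    obtain u where up: "\<forall>i<N. u i > 0" and eq: "\<forall>i<N. (\<Sum>j<N. real (A i j) * u j) = l * u i"
      using l by blast
    have "(\<Sum>i<N. l * u i) = (\<Sum>i<N. \<Sum>j<N. real (A i j) * u j)" using eq by simp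
    also have "\<dots> = (\<Sum>j<N. \<Sum>i<N. real (A i j) * u j)" by (rule sum.swap)
    also have "\<dots> = (\<Sum>j<N. real d * u j)"
    proof (rule sum.cong)
      fix j assume "j \<in> {..<N}"
      have "(\<Sum>i<N. real (A i j) * u j) = real (\<Sum>i<N. A i j) * u j"
        by (simp add: sum_distrib_right[symmetric])
      thus "(\<Sum>i<N. real (A i j) * u j) = real d * u j" using cols \<open>j \<in> {..<N}\<close> by (simp del: of_nat_sum)
    qed simp
    finally have "l * (\<Sum>i<N. u i) = real d * (\<Sum>i<N. u i)" by (simp add: sum_distrib_left)
    moreover have "(\<Sum>i<N. u i) > 0" using up Nge1 by (intro sum_pos) (auto simp: lessThan_empty_iff)
    ultimately show ?thesis by simp
  qed
  show ?thesis unfolding lamA_def using ex uniq by (rule the_equality)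
qed

lemma Apow_reach:
  assumes "\<forall>i<N. \<forall>j<N. A i j = 1 \<longrightarrow> i \<in> S \<longrightarrow> j \<in> S" "i \<in> S"
  shows "j < N \<Longrightarrow> Apow N A k i j > 0 \<Longrightarrow> j \<in> S"
proof (induction k arbitrary: j)
  case 0
  then show ?case using assms by (auto split: if_splits)
next
  case (Suc k)
  have "\<exists>l\<in>{..<N}. Apow N A k i l * A l j \<noteq> 0" proof (rule ccontr)
    assume "\<not> ?thesis"
    hence "(\<Sum>l<N. Apow N A k i l * A l j) = 0" by (intro sum.neutral) auto
    thus False using Suc.prems by (metis Apow.simps(2) less_irrefl)
  qed
  then obtain l where l: "l < N" "Apow N A k i l * A l j > 0" by auto
  hence "Apow N A k i l > 0" "A l j = 1" using A01'[of l j] l Suc.prems by auto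
  thus ?case using Suc.IH l assms(1) Suc.prems by blast
qed

definition u0 :: "nat \<Rightarrow> real" where "u0 i = (if i < N then 1 / real N else 0)"

lemma uvec_eq: "uvec N A = u0"
proof -
  have P: "(\<forall>i<N. u0 i > 0) \<and> (\<forall>i\<ge>N. u0 i = 0) \<and> (\<Sum>i<N. u0 i) = 1 \<and>
       (\<forall>i<N. (\<Sum>j<N. real (A i j) * u0 j) = lamA N A * u0 i)"
  proof (intro conjI allI impI)
    show "(\<Sum>i<N. u0 i) = 1" using Nge1 by (simp add: u0_def)
    fix i assume i: "i < N"
    have "(\<Sum>j<N. real (A i j) * u0 j) = (\<Sum>j<N. real (A i j)) / real N"
      by (simp add: u0_def sum_divide_distrib)
    also have "\<dots> = real d / real N" using rows i by (metis of_nat_sum)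
    finally show "(\<Sum>j<N. real (A i j) * u0 j) = lamA N A * u0 i" using i by (simp add: lamA_eq u0_def)
  qed (use Nge1 in \<open>auto simp: u0_def\<close>)
  have U: "u = u0" if u: "(\<forall>i<N. u i > 0) \<and> (\<forall>i\<ge>N. u i = 0) \<and> (\<Sum>i<N. u i) = 1 \<and>
       (\<forall>i<N. (\<Sum>j<N. real (A i j) * u j) = lamA N A * u i)" for u
  proof -
    define M where "M = Max (u ` {..<N})"
    have Mge: "i < N \<Longrightarrow> u i \<le> M" for i unfolding M_def by auto
    obtain i0 where i0: "i0 < N" "u i0 = M"
    proof -
      have "M \<in> u ` {..<N}" unfolding M_def using Nge1 by (intro Max_in) (auto simp: lessThan_empty_iff)
      thus ?thesis using that by auto
    qed
    define S where "S = {i. i < N \<and> u i = M}"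
    have closed: "\<forall>i<N. \<forall>j<N. A i j = 1 \<longrightarrow> i \<in> S \<longrightarrow> j \<in> S"
    proof (intro allI impI)
      fix i j assume ij: "i < N" "j < N" "A i j = 1" "i \<in> S"
      have eq: "(\<Sum>l<N. real (A i l) * u l) = real d * M" using u ij S_def lamA_eq by auto
      have le: "\<And>l. l \<in> {..<N} \<Longrightarrow> real (A i l) * u l \<le> real (A i l) * M"
        using Mge by (simp add: mult_left_mono)
      have "(\<Sum>l<N. real (A i l) * M) = real d * M"
        using rows ij by (simp add: sum_distrib_right[symmetric]) (metis of_nat_sum)
      hence "(\<Sum>l<N. real (A i l) * M - real (A i l) * u l) = 0" using eq by (simp add: sum_subtractf)
      hence "\<forall>l\<in>{..<N}. real (A i l) * M - real (A i l) * u l = 0"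
        by (subst sum_nonneg_eq_0_iff[symmetric]) (use le in auto)
      hence "real (A i j) * M - real (A i j) * u j = 0" using ij by blast
      hence "M - u j = 0" using ij by simp
      thus "j \<in> S" using ij S_def by auto
    qed
    have allS: "j < N \<Longrightarrow> u j = M" for j
    proof -
      assume j: "j < N"
      obtain k where "k > 0" "\<forall>i<N. \<forall>j<N. Apow N A k i j > 0" using prim unfolding primitive_def by auto
      hence "Apow N A k i0 j > 0" using i0 j by auto
      hence "j \<in> S" using Apow_reach[OF closed, of i0 j k] i0 j S_def by auto
      thus ?thesis using S_def by auto
    qed
    have "(\<Sum>i<N. u i) = real N * M" using allS by simp
    hence "M = 1 / real N" using u Nge1 by (simp add: field_simps)
    thus ?thesis using allS u by (auto simp: u0_def fun_eq_iff not_less)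
  qed
  show ?thesis unfolding uvec_def using P U by (rule the_equality)
qed

lemma Pm_eq: "i < N \<Longrightarrow> j < N \<Longrightarrow> Pm N A i j = real (A i j) / real d"
  by (simp add: Pm_def uvec_eq u0_def lamA_eq)

lemma Pm_C: "i < N \<Longrightarrow> j \<in> Cset N A i \<Longrightarrow> Pm N A i j = 1 / real d"
  by (simp add: Pm_eq Cset_def)

lemma cc_eq: "i < N \<Longrightarrow> cc N A i = d" by (simp add: cc_def card_Cset)

end


context regA begin

definition nxt :: "nat \<Rightarrow> nat \<Rightarrow> nat" where
  "nxt i k = sorted_list_of_set (Cset N A i) ! (k mod d)"

lemma Cset_fin: "finite (Cset N A i)" by (auto simp: Cset_def)

lemma nxt_in: "i < N \<Longrightarrow> nxt i k \<in> Cset N A i"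
proof -
  assume i: "i < N"
  have "length (sorted_list_of_set (Cset N A i)) = d" using card_Cset[OF i] by simp
  hence "k mod d < length (sorted_list_of_set (Cset N A i))" using d_pos by simp
  thus ?thesis unfolding nxt_def using nth_mem Cset_fin by (metis set_sorted_list_of_set)
qed

lemma nxt_lt: "i < N \<Longrightarrow> nxt i k < N" using nxt_in by (auto simp: Cset_def)
lemma nxt_A: "i < N \<Longrightarrow> A i (nxt i k) = 1" using nxt_in by (auto simp: Cset_def)

lemma nxt_card: assumes i: "i < N" and j: "j \<in> Cset N A i"
  shows "card ({..<d} \<inter> {k. nxt i k = j}) = 1"
proof -
  let ?L = "sorted_list_of_set (Cset N A i)"
  have len: "length ?L = d" using card_Cset[OF i] by simp
  have dist: "distinct ?L" by simp
  obtain p where p: "p < d" "?L ! p = j" using j len Cset_fin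
    by (metis in_set_conv_nth set_sorted_list_of_set)
  have "\<forall>k<d. nxt i k = j \<longleftrightarrow> k = p"
  proof (intro allI impI iffI)
    fix k assume k: "k < d" "nxt i k = j"
    hence "?L ! k = ?L ! p" using p by (simp add: nxt_def)
    thus "k = p" using dist k p len nth_eq_iff_index_eq by blast
  next
    fix k assume "k < d" "k = p" thus "nxt i k = j" using p by (simp add: nxt_def)
  qed
  hence "{..<d} \<inter> {k. nxt i k = j} = {p}" using p by auto
  thus ?thesis by simp
qed

lemma OmegaA_shiftk: "x \<in> OmegaA N A \<Longrightarrow> shiftk k x \<in> OmegaA N A"
  by (auto simp: OmegaA_def shiftk_def)

lemma shiftk_apply[simp]: "shiftk k x n = x (n + k)" by (simp add: shiftk_def)

lemma prep_OmegaA: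
  assumes "adm N A \<alpha>" "z \<in> OmegaA N A" "\<alpha> \<noteq> [] \<Longrightarrow> A (last \<alpha>) (z 0) = 1"
  shows "prep \<alpha> z \<in> OmegaA N A"
  unfolding OmegaA_def
proof safe
  fix n
  show "prep \<alpha> z n < N" using assms by (auto simp: prep_def adm_def OmegaA_def)
  show "A (prep \<alpha> z n) (prep \<alpha> z (Suc n)) = 1"
  proof (cases "Suc n < length \<alpha>")
    case True thus ?thesis using assms(1) by (auto simp: prep_def adm_def)
  next
    case False
    show ?thesis
    proof (cases "Suc n = length \<alpha>")
      case True
      hence "\<alpha> \<noteq> []" by auto
      have "length \<alpha> - 1 = n" using True by simp
      hence "\<alpha> ! n = last \<alpha>" using \<open>\<alpha> \<noteq> []\<close> by (simp add: last_conv_nth)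
      thus ?thesis using True assms(3) \<open>\<alpha> \<noteq> []\<close> by (simp add: prep_def)
    next
      case False
      hence "n \<ge> length \<alpha>" using \<open>\<not> Suc n < length \<alpha>\<close> by auto
      hence "Suc n - length \<alpha> = Suc (n - length \<alpha>)" by auto
      thus ?thesis using assms(2) \<open>n \<ge> length \<alpha>\<close> by (simp add: prep_def OmegaA_def)
    qed
  qed
qed

primrec traj :: "nat \<Rightarrow> nat \<Rightarrow> nat" where
  "traj i 0 = i" | "traj i (Suc n) = nxt (traj i n) 0"

lemma traj_OmegaA: "i < N \<Longrightarrow> traj i \<in> OmegaA N A"
proof -
  assume i: "i < N"
  have lt: "traj i n < N" for n by (induction n) (use i nxt_lt in auto)
  show ?thesis unfolding OmegaA_def using lt nxt_A by auto
qed

lemma adm_succ: "adm N A w \<longleftrightarrow> (\<forall>a\<in>set w. a < N) \<and> successively (\<lambda>a b. A a b = 1) w"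
  by (simp add: adm_def successively_conv_nth all_set_conv_all_nth)

lemma adm_Cons: "adm N A (a # w) \<longleftrightarrow> a < N \<and> adm N A w \<and> (w \<noteq> [] \<longrightarrow> A a (hd w) = 1)"
  unfolding adm_succ by (auto simp: successively_Cons)

lemma adm_append: "adm N A (u @ v) \<longleftrightarrow> adm N A u \<and> adm N A v \<and> (u \<noteq> [] \<longrightarrow> v \<noteq> [] \<longrightarrow> A (last u) (hd v) = 1)"
  unfolding adm_succ by (auto simp: successively_append_iff)

lemma adm_append1: "adm N A (w @ [c]) \<longleftrightarrow> adm N A w \<and> c < N \<and> (w \<noteq> [] \<longrightarrow> A (last w) c = 1)"
  unfolding adm_append by (auto simp: adm_succ)

lemma adm_Nil[simp]: "adm N A []" by (simp add: adm_def)

lemma adm_last_lt: "adm N A w \<Longrightarrow> w \<noteq> [] \<Longrightarrow> last w < N"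
  by (auto simp: adm_def last_conv_nth)

lemma adm_nth_lt: "adm N A w \<Longrightarrow> i < length w \<Longrightarrow> w ! i < N"
  by (auto simp: adm_def)

lemma cyl_ne: assumes "adm N A w" "w \<noteq> []" shows "prep (butlast w) (traj (last w)) \<in> cyl N A w"
proof -
  have l: "last w < N" using assms adm_last_lt by auto
  have bw: "adm N A (butlast w)" using assms adm_append1[of "butlast w" "last w"] by simp
  have "prep (butlast w) (traj (last w)) \<in> OmegaA N A"
  proof (rule prep_OmegaA[OF bw traj_OmegaA[OF l]])
    assume "butlast w \<noteq> []"
    thus "A (last (butlast w)) (traj (last w) 0) = 1"
      using assms adm_append1[of "butlast w" "last w"] by simp
  qed
  moreover have "\<forall>i<length w. prep (butlast w) (traj (last w)) i = w ! i"
  proof (intro allI impI)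
    fix i assume i: "i < length w"
    show "prep (butlast w) (traj (last w)) i = w ! i"
    proof (cases "i < length w - 1")
      case True thus ?thesis by (simp add: prep_def nth_butlast)
    next
      case False hence "i = length w - 1" using i by auto
      thus ?thesis using assms by (simp add: prep_def last_conv_nth)
    qed
  qed
  ultimately show ?thesis by (simp add: cyl_def)
qed

lemma cyl_nonempty: "adm N A w \<Longrightarrow> w \<noteq> [] \<Longrightarrow> cyl N A w \<noteq> {}"
  using cyl_ne by blast

lemma cyl_Nil: "cyl N A [] = OmegaA N A" by (simp add: cyl_def)

lemma cyl_adm: assumes "x \<in> cyl N A w" shows "adm N A w"
  unfolding adm_def
proof (intro conjI allI impI)
  fix i assume "i < length w" thus "w ! i < N" using assms by (auto simp: cyl_def OmegaA_def) (metis)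
next
  fix i assume i: "Suc i < length w"
  have "x i = w ! i" "x (Suc i) = w ! Suc i" using assms i by (auto simp: cyl_def)
  moreover have "A (x i) (x (Suc i)) = 1" using assms by (simp add: cyl_def OmegaA_def)
  ultimately show "A (w ! i) (w ! Suc i) = 1" by simp
qed

lemma cyl_append_sub: "cyl N A (u @ v) \<subseteq> cyl N A u"
proof
  fix x assume x: "x \<in> cyl N A (u @ v)"
  have "\<forall>i<length u. x i = u ! i"
  proof (intro allI impI)
    fix i assume "i < length u"
    thus "x i = u ! i" using x by (auto simp: cyl_def) (metis nth_append trans_less_add1)
  qed
  thus "x \<in> cyl N A u" using x by (auto simp: cyl_def)
qed

lemma in_cyl_iff: "x \<in> cyl N A w \<longleftrightarrow> x \<in> OmegaA N A \<and> map x [0..<length w] = w"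
  unfolding cyl_def list_eq_iff_nth_eq by auto

lemma cyl_take: "x \<in> OmegaA N A \<Longrightarrow> x \<in> cyl N A (map x [0..<n])"
  by (simp add: in_cyl_iff)

lemma cyl_snoc: "x \<in> cyl N A (w @ [c]) \<longleftrightarrow> x \<in> cyl N A w \<and> x (length w) = c"
  unfolding cyl_def by (auto simp: nth_append less_Suc_eq)

lemma adm_map: "x \<in> OmegaA N A \<Longrightarrow> adm N A (map x [0..<n])"
  by (rule cyl_adm[OF cyl_take])

end


context regA begin

definition Qm :: "nat \<Rightarrow> nat measure" where
  "Qm n = measure_pmf (pmf_of_set (if n = 0 then {..<N} else {..<d}))"

definition M0 :: "(nat \<Rightarrow> nat) measure" where "M0 = PiM UNIV Qm"

primrec Fm :: "(nat \<Rightarrow> nat) \<Rightarrow> nat \<Rightarrow> nat" where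
  "Fm c 0 = c 0 mod N"
| "Fm c (Suc n) = nxt (Fm c n) (c (Suc n))"

lemma Fm_lt: "Fm c n < N"
  by (induction n) (use Nge1 nxt_lt in auto)

lemma Fm_Omega: "Fm c \<in> OmegaA N A"
  unfolding OmegaA_def using Fm_lt nxt_A by auto

lemma Qm_prob: "prob_space (Qm n)" unfolding Qm_def by (rule measure_pmf.prob_space_axioms)

interpretation PP: product_prob_space Qm UNIV
  by (rule product_prob_spaceI[OF Qm_prob])

lemma space_M0: "space M0 = UNIV"
  by (simp add: M0_def space_PiM Qm_def)

lemma sets_Qm[simp]: "sets (Qm n) = UNIV" by (simp add: Qm_def)

lemma meas_Fm_n: "(\<lambda>c. Fm c n) \<in> measurable M0 (count_space UNIV)"
proof (induction n)
  case 0
  have "(\<lambda>c. c 0) \<in> measurable M0 (Qm 0)" unfolding M0_def by (rule measurable_component_singleton) simp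
  hence "(\<lambda>c. c 0) \<in> measurable M0 (count_space UNIV)"
    by (simp add: Qm_def measurable_cong_sets)
  hence "(\<lambda>c. (\<lambda>i. i mod N) (c 0)) \<in> measurable M0 (count_space UNIV)"
    by (rule measurable_compose[where g="\<lambda>i. i mod N"]) simp
  thus ?case by simp
next
  case (Suc n)
  have "(\<lambda>c. c (Suc n)) \<in> measurable M0 (Qm (Suc n))" unfolding M0_def by (rule measurable_component_singleton) simp
  hence cs: "(\<lambda>c. c (Suc n)) \<in> measurable M0 (count_space UNIV)"
    by (simp add: Qm_def measurable_cong_sets)
  have "(\<lambda>c. nxt i (c (Suc n))) \<in> measurable M0 (count_space UNIV)" for i
    using cs by (rule measurable_compose[where g="nxt i"]) simp
  hence "(\<lambda>c. nxt (Fm c n) (c (Suc n))) \<in> measurable M0 (count_space UNIV)"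
    by (rule measurable_compose_countable[where f="\<lambda>i c. nxt i (c (Suc n))", OF _ Suc.IH])
  thus ?case by simp
qed

lemma meas_F: "(\<lambda>c. Fm c) \<in> measurable M0 (MOmega N A)"
  unfolding MOmega_def
proof (rule measurable_restrict_space2)
  show "Fm \<in> space M0 \<rightarrow> OmegaA N A" using Fm_Omega by auto
  show "Fm \<in> measurable M0 (Pi\<^sub>M UNIV (\<lambda>_. count_space UNIV))"
    using measurable_PiM_single'[of UNIV "\<lambda>n c. Fm c n" M0 "\<lambda>_. count_space UNIV"] meas_Fm_n
    by (simp add: space_PiM)
qed

definition Xs :: "nat list \<Rightarrow> nat \<Rightarrow> nat set" where
  "Xs w k = (if k = 0 then {a. a mod N = w ! 0} else {a. nxt (w ! (k - 1)) a = w ! k})"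

lemma Fm_prefix: "n \<le> length w \<Longrightarrow> (\<forall>k<n. Fm c k = w ! k) \<longleftrightarrow> (\<forall>k<n. c k \<in> Xs w k)"
proof (induction n)
  case 0 then show ?case by simp
next
  case (Suc n)
  have IH: "(\<forall>k<n. Fm c k = w ! k) \<longleftrightarrow> (\<forall>k<n. c k \<in> Xs w k)" using Suc by simp
  have step: "(\<forall>k<n. Fm c k = w ! k) \<Longrightarrow> (Fm c n = w ! n \<longleftrightarrow> c n \<in> Xs w n)"
    by (cases n) (auto simp: Xs_def)
  show ?case using IH step by (auto simp: less_Suc_eq)
qed

lemma Fm_cyl: "Fm c \<in> cyl N A w \<longleftrightarrow> (\<forall>k<length w. c k \<in> Xs w k)"
  using Fm_prefix[of "length w" w c] Fm_Omega by (simp add: cyl_def)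

lemma Qm_Xs:
  assumes w: "adm N A w" and k: "k < length w"
  shows "emeasure (Qm k) (Xs w k) = ennreal (if k = 0 then 1 / real N else 1 / real d)"
proof (cases "k = 0")
  case True
  have "0 < length w" using k by (simp only: gr_zeroI less_nat_zero_code)
  hence w0: "w ! 0 < N" using adm_nth_lt[OF w, of 0] by simp
  have "{..<N} \<inter> {a. a mod N = w ! 0} = {w ! 0}" using w0 by auto
  hence "measure (Qm k) (Xs w k) = 1 / real N"
    using True Nge1 by (simp add: Qm_def Xs_def measure_pmf_of_set lessThan_empty_iff)
  thus ?thesis using True by (simp add: Qm_def measure_pmf.emeasure_eq_measure)
next
  case False
  then obtain j where j: "k = Suc j" by (cases k) auto
  have lt: "w ! j < N" using w k j by (auto simp: adm_def)
  have C: "w ! k \<in> Cset N A (w ! j)" using w k j adm_nth_lt[OF w k] by (auto simp: adm_def Cset_def)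
  have "card ({..<d} \<inter> Xs w k) = 1" using nxt_card[OF lt C] j by (simp add: Xs_def)
  hence "measure (Qm k) (Xs w k) = 1 / real d"
    using j d_pos by (simp add: Qm_def measure_pmf_of_set lessThan_empty_iff)
  thus ?thesis using False by (simp add: Qm_def measure_pmf.emeasure_eq_measure)
qed

definition mu0 :: "(nat \<Rightarrow> nat) measure" where "mu0 = distr M0 (MOmega N A) Fm"

lemma mu0_cyl:
  assumes w: "adm N A w" "w \<noteq> []"
  shows "emeasure mu0 (cyl N A w) = ennreal (1 / (real N * real d ^ (length w - 1)))"
proof -
  have cs: "cyl N A w \<in> sets (MOmega N A)"
  proof -
    have "Measurable.pred (PiM UNIV (\<lambda>_::nat. count_space (UNIV::nat set))) (\<lambda>x. \<forall>i<length w. x i = w ! i)"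
      by measurable
    hence "{x. \<forall>i<length w. x i = w ! i} \<in> sets (PiM UNIV (\<lambda>_::nat. count_space (UNIV::nat set)))"
      by (simp add: pred_def space_PiM)
    hence "OmegaA N A \<inter> {x. \<forall>i<length w. x i = w ! i} \<in> sets (MOmega N A)"
      unfolding MOmega_def by (auto simp: sets_restrict_space)
    moreover have "OmegaA N A \<inter> {x. \<forall>i<length w. x i = w ! i} = cyl N A w" by (auto simp: cyl_def)
    ultimately show ?thesis by simp
  qed
  have "emeasure mu0 (cyl N A w) = emeasure M0 (Fm -` cyl N A w \<inter> space M0)"
    unfolding mu0_def using cs meas_F by (simp add: emeasure_distr)
  also have "Fm -` cyl N A w \<inter> space M0 = {c \<in> space (PiM UNIV Qm). \<forall>k\<in>{..<length w}. c k \<in> Xs w k}"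
    using Fm_cyl by (auto simp: space_M0 M0_def[symmetric])
  also have "emeasure M0 \<dots> = (\<Prod>k\<in>{..<length w}. emeasure (Qm k) (Xs w k))"
    unfolding M0_def by (rule PP.emeasure_PiM_Collect) auto
  also have "\<dots> = (\<Prod>k\<in>{..<length w}. ennreal (if k = 0 then 1 / real N else 1 / real d))"
    using Qm_Xs[OF w(1)] by simp
  also have "\<dots> = ennreal (\<Prod>k\<in>{..<length w}. (if k = 0 then 1 / real N else 1 / real d))"
    by (rule prod_ennreal) simp
  also have "(\<Prod>k\<in>{..<length w}. (if k = 0 then 1 / real N else 1 / real d)) = 1 / (real N * real d ^ (length w - 1))"
  proof -
    obtain m where m: "length w = Suc m" using w by (cases "length w") auto
    have "(\<Prod>k<Suc m. (if k = 0 then 1 / real N else 1 / real d)) =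
       (if 0 = (0::nat) then 1 / real N else 1 / real d) * (\<Prod>k<m. (if Suc k = 0 then 1 / real N else 1 / real d))"
      by (rule prod.lessThan_Suc_shift)
    thus ?thesis unfolding m by (simp add: power_one_over)
  qed
  finally show ?thesis .
qed

lemma mu0_props: "sets mu0 = sets (MOmega N A) \<and> emeasure mu0 (space mu0) = 1 \<and>
     (\<forall>\<alpha>. adm N A \<alpha> \<and> \<alpha> \<noteq> [] \<longrightarrow>
        emeasure mu0 (cyl N A \<alpha>) = ennreal (uvec N A (last \<alpha>) / lamA N A ^ (length \<alpha> - 1)))"
proof (intro conjI allI impI)
  show "sets mu0 = sets (MOmega N A)" by (simp add: mu0_def)
  have "space mu0 = OmegaA N A" by (simp add: mu0_def MOmega_def space_restrict_space space_PiM)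
  have "emeasure mu0 (space mu0) = emeasure M0 (Fm -` space (MOmega N A) \<inter> space M0)"
    unfolding mu0_def using meas_F by (simp add: emeasure_distr)
  also have "Fm -` space (MOmega N A) \<inter> space M0 = space M0"
    using Fm_Omega by (auto simp: MOmega_def space_restrict_space space_PiM)
  also have "emeasure M0 (space M0) = 1" unfolding M0_def by (rule PP.emeasure_space_1)
  finally show "emeasure mu0 (space mu0) = 1" .
  fix \<alpha> assume a: "adm N A \<alpha> \<and> \<alpha> \<noteq> []"
  have "last \<alpha> < N" using a adm_last_lt by auto
  thus "emeasure mu0 (cyl N A \<alpha>) = ennreal (uvec N A (last \<alpha>) / lamA N A ^ (length \<alpha> - 1))"
    using mu0_cyl[of \<alpha>] a by (simp add: uvec_eq u0_def lamA_eq)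
qed

lemma muc_props: "sets (muc N A) = sets (MOmega N A) \<and> emeasure (muc N A) (space (muc N A)) = 1 \<and>
     (\<forall>\<alpha>. adm N A \<alpha> \<and> \<alpha> \<noteq> [] \<longrightarrow>
        emeasure (muc N A) (cyl N A \<alpha>) = ennreal (uvec N A (last \<alpha>) / lamA N A ^ (length \<alpha> - 1)))"
  unfolding muc_def by (rule someI[of _ mu0]) (rule mu0_props)

abbreviation "mu \<equiv> muc N A"

lemma sets_mu: "sets mu = sets (MOmega N A)" using muc_props by blast

lemma space_mu: "space mu = OmegaA N A"
  using sets_eq_imp_space_eq[OF sets_mu] by (simp add: MOmega_def space_restrict_space space_PiM)

lemma prob_mu: "prob_space mu" using muc_props by (intro prob_spaceI) blast

lemma cyl_sets: "cyl N A w \<in> sets mu"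
proof -
  have "Measurable.pred (PiM UNIV (\<lambda>_::nat. count_space (UNIV::nat set))) (\<lambda>x. \<forall>i<length w. x i = w ! i)"
    by measurable
  hence "{x. \<forall>i<length w. x i = w ! i} \<in> sets (PiM UNIV (\<lambda>_::nat. count_space (UNIV::nat set)))"
    by (simp add: pred_def space_PiM)
  hence "OmegaA N A \<inter> {x. \<forall>i<length w. x i = w ! i} \<in> sets (MOmega N A)"
    unfolding MOmega_def by (auto simp: sets_restrict_space)
  moreover have "OmegaA N A \<inter> {x. \<forall>i<length w. x i = w ! i} = cyl N A w" by (auto simp: cyl_def)
  ultimately show ?thesis by (simp add: sets_mu)
qed

lemma emeasure_cyl: "adm N A w \<Longrightarrow> w \<noteq> [] \<Longrightarrow>
   emeasure mu (cyl N A w) = ennreal (1 / (real N * real d ^ (length w - 1)))"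
  using muc_props adm_last_lt[of w] by (simp add: uvec_eq u0_def lamA_eq)

lemma measure_cyl: "adm N A w \<Longrightarrow> w \<noteq> [] \<Longrightarrow>
   measure mu (cyl N A w) = 1 / (real N * real d ^ (length w - 1))"
  using emeasure_cyl by (simp add: measure_def)

lemma meas_coord: "(\<lambda>y. y k) \<in> measurable mu (count_space UNIV)"
proof -
  have "(\<lambda>y. y k) \<in> measurable (PiM UNIV (\<lambda>_::nat. count_space (UNIV::nat set))) (count_space UNIV)"
    by (rule measurable_component_singleton) simp
  hence "(\<lambda>y. y k) \<in> measurable (MOmega N A) (count_space UNIV)"
    unfolding MOmega_def by (rule measurable_restrict_space1)
  thus ?thesis by (simp add: measurable_cong_sets[OF sets_mu refl])
qed

end


context regA begin

lemma src_sinv[simp]: "src (sinv \<gamma> y) = y"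
  by (simp add: src_def sinv_def split: prod.splits)

lemma fst_sinv: "fst (sinv (\<alpha>, \<beta>) y) = prep \<alpha> (shiftk (length \<beta> - 1) y)"
  by (simp add: sinv_def)

lemma sinv_simp: "sinv (\<alpha>, \<beta>) y = (prep \<alpha> (shiftk (length \<beta> - 1) y), int (length \<alpha>) - int (length \<beta>) + 1, y)"
  by (simp add: sinv_def)

lemma IA_D: assumes "(\<alpha>, \<beta>) \<in> IA N A"
  shows "adm N A \<alpha>" "adm N A \<beta>" "\<beta> \<noteq> []"
    "\<alpha> \<noteq> [] \<Longrightarrow> A (last \<alpha>) (last \<beta>) = 1"
    "\<alpha> \<noteq> [] \<Longrightarrow> length \<beta> \<noteq> 1 \<Longrightarrow> last \<alpha> \<noteq> \<beta> ! (length \<beta> - 2)"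
  using assms by (auto simp: IA_def)

lemma fst_sinv_Omega:
  assumes g: "(\<alpha>, \<beta>) \<in> IA N A" and y: "y \<in> cyl N A \<beta>"
  shows "prep \<alpha> (shiftk (length \<beta> - 1) y) \<in> OmegaA N A"
proof (rule prep_OmegaA)
  show "adm N A \<alpha>" using IA_D[OF g] by simp
  show "shiftk (length \<beta> - 1) y \<in> OmegaA N A" using y by (auto simp: cyl_def intro: OmegaA_shiftk)
  assume "\<alpha> \<noteq> []"
  have "y (length \<beta> - 1) = last \<beta>" using y IA_D(3)[OF g] by (auto simp: cyl_def last_conv_nth)
  thus "A (last \<alpha>) (shiftk (length \<beta> - 1) y 0) = 1" using IA_D(4)[OF g \<open>\<alpha> \<noteq> []\<close>] by simp
qed

lemma kappa_sinv:
  assumes g: "(\<alpha>, \<beta>) \<in> IA N A" and y: "y \<in> cyl N A \<beta>"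
  shows "kappa (sinv (\<alpha>, \<beta>) y) = length \<beta> - 1"
proof -
  let ?L = "length \<alpha>" and ?K = "length \<beta>"
  let ?x = "prep \<alpha> (shiftk (?K - 1) y)" and ?n = "int ?L - int ?K + 1"
  have K1: "?K \<ge> 1" using IA_D(3)[OF g] by (cases \<beta>) auto
  let ?P = "\<lambda>k::nat. int k \<ge> max 0 (- ?n) \<and> shiftk (nat (?n + int k)) ?x = shiftk k y"
  have P1: "?P (?K - 1)"
  proof
    show "int (?K - 1) \<ge> max 0 (- ?n)" using K1 by auto
    have e: "nat (?n + int (?K - 1)) = ?L" using K1 by auto
    show "shiftk (nat (?n + int (?K - 1))) ?x = shiftk (?K - 1) y"
      unfolding e by (auto simp: fun_eq_iff prep_def)
  qed
  have P2: "?K - 1 \<le> k" if Pk: "?P k" for k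
  proof (rule ccontr)
    assume "\<not> ?K - 1 \<le> k"
    hence kl: "k < ?K - 1" by simp
    have "int k \<ge> - ?n" using Pk by simp
    hence L1: "?L \<ge> 1" using kl by linarith
    hence ane: "\<alpha> \<noteq> []" by auto
    have K2: "?K \<noteq> 1" using kl by simp
    define p where "p = nat (?n + int k)"
    have "int k \<ge> int ?K - 1 - int ?L" using \<open>int k \<ge> - ?n\<close> by simp
    hence p: "p + (?K - 2 - k) = ?L - 1" using kl L1 unfolding p_def by linarith
    have "shiftk p ?x (?K - 2 - k) = shiftk k y (?K - 2 - k)" using Pk p_def by simp
    hence "?x (?L - 1) = y (?K - 2)" using p kl by (simp add: add.commute)
    moreover have "?x (?L - 1) = last \<alpha>" using L1 ane by (simp add: prep_def last_conv_nth)
    moreover have "y (?K - 2) = \<beta> ! (?K - 2)" using y kl by (auto simp: cyl_def)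
    ultimately show False using IA_D(5)[OF g ane K2] by simp
  qed
  have "kappa (sinv (\<alpha>, \<beta>) y) = (LEAST k. ?P k)" by (simp add: kappa_def sinv_def)
  also have "\<dots> = ?K - 1" by (rule Least_equality[where P="?P", OF P1 P2])
  finally show ?thesis .
qed

lemma sinv_Gg:
  assumes g: "\<gamma> \<in> IA N A" and y: "y \<in> cyl N A (snd \<gamma>)"
  shows "sinv \<gamma> y \<in> Gg N A \<gamma>"
proof -
  obtain \<alpha> \<beta> where ab: "\<gamma> = (\<alpha>, \<beta>)" by (cases \<gamma>)
  show ?thesis using kappa_sinv[of \<alpha> \<beta> y] g y unfolding ab
    by (simp add: Gg_def sinv_def)
qed

lemma Gg_D:
  assumes "g \<in> Gg N A \<gamma>"
  shows "src g \<in> cyl N A (snd \<gamma>)" "g = sinv \<gamma> (src g)"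
  using assms by (auto simp: Gg_def sinv_def src_def split: prod.splits)

lemma sinv_GA:
  assumes g: "\<gamma> \<in> IA N A" and y: "y \<in> cyl N A (snd \<gamma>)"
  shows "sinv \<gamma> y \<in> GA N A"
proof -
  obtain \<alpha> \<beta> where ab: "\<gamma> = (\<alpha>, \<beta>)" by (cases \<gamma>)
  have K1: "length \<beta> \<ge> 1" using IA_D(3) g ab by (cases \<beta>) auto
  have x: "prep \<alpha> (shiftk (length \<beta> - 1) y) \<in> OmegaA N A" using fst_sinv_Omega g y ab by simp
  have yo: "y \<in> OmegaA N A" using y by (simp add: cyl_def)
  let ?n = "int (length \<alpha>) - int (length \<beta>) + 1"
  have e: "nat (?n + int (length \<beta> - 1)) = length \<alpha>" using K1 by auto
  have "?n + int (length \<beta> - 1) \<ge> 0 \<and>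
     shiftk (nat (?n + int (length \<beta> - 1))) (prep \<alpha> (shiftk (length \<beta> - 1) y)) = shiftk (length \<beta> - 1) y"
    unfolding e using K1 by (auto simp: fun_eq_iff prep_def)
  thus ?thesis using x yo unfolding ab by (auto simp: GA_def sinv_def)
qed

lemma Gg_sub_GA: "\<gamma> \<in> IA N A \<Longrightarrow> g \<in> Gg N A \<gamma> \<Longrightarrow> g \<in> GA N A"
  using Gg_D sinv_GA by metis

lemma Gg_unique:
  assumes "g \<in> Gg N A \<gamma>" "g \<in> Gg N A \<gamma>'" "\<gamma> \<in> IA N A" "\<gamma>' \<in> IA N A"
  shows "\<gamma> = \<gamma>'"
proof -
  obtain \<alpha> \<beta> where ab: "\<gamma> = (\<alpha>, \<beta>)" by (cases \<gamma>)
  obtain \<alpha>' \<beta>' where ab': "\<gamma>' = (\<alpha>', \<beta>')" by (cases \<gamma>')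
  obtain x n y where g: "g = (x, n, y)" by (cases g) auto
  have h1: "y \<in> cyl N A \<beta>" "x = prep \<alpha> (shiftk (length \<beta> - 1) y)"
     "n = int (length \<alpha>) - int (length \<beta>) + 1" "kappa (x, n, y) = length \<beta> - 1"
    using assms(1) unfolding ab g Gg_def by auto
  have h2: "y \<in> cyl N A \<beta>'" "x = prep \<alpha>' (shiftk (length \<beta>' - 1) y)"
     "n = int (length \<alpha>') - int (length \<beta>') + 1" "kappa (x, n, y) = length \<beta>' - 1"
    using assms(2) unfolding ab' g Gg_def by auto
  have b0: "\<beta> \<noteq> []" "\<beta>' \<noteq> []" using assms(3,4) ab ab' by (auto simp: IA_def)
  have lb: "length \<beta> = length \<beta>'"
  proof -
    have "length \<beta> - 1 = length \<beta>' - 1" using h1(4) h2(4) by simp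
    moreover have "length \<beta> \<ge> 1" "length \<beta>' \<ge> 1" using b0 by (auto simp: Suc_le_eq)
    ultimately show ?thesis by simp
  qed
  have bb: "\<beta> = \<beta>'" using h1(1) h2(1) lb by (simp add: in_cyl_iff)
  have la: "length \<alpha> = length \<alpha>'" using h1(3) h2(3) lb by simp
  have aa: "\<alpha> = \<alpha>'"
  proof (rule nth_equalityI[OF la])
    fix i assume "i < length \<alpha>"
    thus "\<alpha> ! i = \<alpha>' ! i" using fun_cong[OF trans[OF h1(2)[symmetric] h2(2)], of i] la
      by (simp add: prep_def)
  qed
  show ?thesis using ab ab' aa bb by simp
qed

lemma piece_of_eq: "\<gamma> \<in> IA N A \<Longrightarrow> g \<in> Gg N A \<gamma> \<Longrightarrow> piece_of N A g = \<gamma>"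
  unfolding piece_of_def using Gg_unique by blast

lemma Gg_cover:
  assumes g: "g \<in> GA N A"
  shows "\<exists>\<gamma>\<in>IA N A. g \<in> Gg N A \<gamma>"
proof -
  obtain x n y where gx: "g = (x, n, y)" by (cases g) auto
  have xo: "x \<in> OmegaA N A" and yo: "y \<in> OmegaA N A" and
    ex: "\<exists>k::nat. n + int k \<ge> 0 \<and> shiftk (nat (n + int k)) x = shiftk k y"
    using g unfolding gx GA_def by auto
  let ?P = "\<lambda>k::nat. int k \<ge> max 0 (- n) \<and> shiftk (nat (n + int k)) x = shiftk k y"
  obtain k where k: "n + int k \<ge> 0" "shiftk (nat (n + int k)) x = shiftk k y" using ex by blast
  have "int k \<ge> max 0 (- n)" using k(1) by (auto simp: max_def)
  hence exP: "\<exists>k. ?P k" using k by blast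
  define k0 where "k0 = (LEAST k. ?P k)"
  have Pk0: "?P k0" unfolding k0_def using exP by (rule LeastI_ex)
  have kmin: "?P k \<Longrightarrow> k0 \<le> k" for k unfolding k0_def by (rule Least_le)
  have kap: "kappa g = k0" unfolding gx kappa_def k0_def by simp
  define m where "m = nat (n + int k0)"
  have m: "int m = n + int k0" using Pk0 unfolding m_def by auto
  define \<beta> where "\<beta> = map y [0..<Suc k0]"
  define \<alpha> where "\<alpha> = map x [0..<m]"
  have shx: "x (j + m) = y (j + k0)" for j
  proof -
    have "shiftk m x = shiftk k0 y" using Pk0 unfolding m_def by blast
    from fun_cong[OF this, of j] show ?thesis by simp
  qed
  have lb: "length \<beta> = Suc k0" and la: "length \<alpha> = m" by (auto simp: \<beta>_def \<alpha>_def)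
  have yb: "y \<in> cyl N A \<beta>" unfolding \<beta>_def by (rule cyl_take[OF yo])
  have xp: "x = prep \<alpha> (shiftk (length \<beta> - 1) y)"
  proof
    fix j show "x j = prep \<alpha> (shiftk (length \<beta> - 1) y) j"
    proof (cases "j < m")
      case True thus ?thesis by (simp add: prep_def \<alpha>_def)
    next
      case False
      hence "x j = y (j - m + k0)" using shx[of "j - m"] by simp
      thus ?thesis using False by (simp add: prep_def la lb)
    qed
  qed
  have IA: "(\<alpha>, \<beta>) \<in> IA N A"
  proof -
    have "adm N A \<alpha>" "adm N A \<beta>" "\<beta> \<noteq> []" using adm_map[OF xo] adm_map[OF yo]
      unfolding \<alpha>_def \<beta>_def by (blast, blast, simp)
    moreover have "A (last \<alpha>) (last \<beta>) = 1 \<and> (length \<beta> = 1 \<or> last \<alpha> \<noteq> \<beta> ! (length \<beta> - 2))"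
      if ane: "\<alpha> \<noteq> []"
    proof
      have m1: "m \<ge> 1" using ane la by (cases \<alpha>) auto
      have la': "last \<alpha> = x (m - 1)" using m1 by (simp add: \<alpha>_def last_map)
      have lb': "last \<beta> = y k0" by (simp add: \<beta>_def)
      have "x m = y k0" using shx[of 0] by simp
      moreover have "A (x (m - 1)) (x (Suc (m - 1))) = 1" using xo by (simp add: OmegaA_def)
      moreover have "Suc (m - 1) = m" using m1 by simp
      ultimately show "A (last \<alpha>) (last \<beta>) = 1" using la' lb' by simp
      show "length \<beta> = 1 \<or> last \<alpha> \<noteq> \<beta> ! (length \<beta> - 2)"
      proof (rule ccontr)
        assume "\<not> ?thesis"
        hence c1: "length \<beta> \<noteq> 1" and c2: "last \<alpha> = \<beta> ! (length \<beta> - 2)" by auto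
        have k1: "k0 \<ge> 1" using c1 lb by simp
        have "length \<beta> - 2 = k0 - 1" using lb k1 by simp
        hence "\<beta> ! (length \<beta> - 2) = y (k0 - 1)" using k1 unfolding \<beta>_def
          by (simp del: upt_Suc add: nth_map)
        hence eq: "x (m - 1) = y (k0 - 1)" using c2 la' by simp
        have "?P (k0 - 1)"
        proof
          show "int (k0 - 1) \<ge> max 0 (- n)" using k1 m m1 by auto
          have e: "nat (n + int (k0 - 1)) = m - 1" using k1 m m1 by auto
          show "shiftk (nat (n + int (k0 - 1))) x = shiftk (k0 - 1) y"
          proof
            fix j show "shiftk (nat (n + int (k0 - 1))) x j = shiftk (k0 - 1) y j"
            proof (cases j)
              case 0 thus ?thesis using e eq by simp
            next
              case (Suc j')
              have "x (j + (m - 1)) = x (j' + m)" using Suc m1 by simp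
              moreover have "y (j + (k0 - 1)) = y (j' + k0)" using Suc k1 by simp
              ultimately show ?thesis using e shx[of j'] by simp
            qed
          qed
        qed
        hence "k0 \<le> k0 - 1" by (rule kmin)
        thus False using k1 by simp
      qed
    qed
    ultimately show ?thesis unfolding IA_def by auto
  qed
  have nn: "n = int (length \<alpha>) - int (length \<beta>) + 1" using m la lb by simp
  have kk: "kappa (x, n, y) = length \<beta> - 1" using kap lb gx by simp
  have "(x, n, y) \<in> Gg N A (\<alpha>, \<beta>)"
    unfolding Gg_def using yb xp nn kk by (simp only: prod.case mem_Collect_eq)
  thus ?thesis using IA gx by blast
qed

lemma piece_of_IA: "g \<in> GA N A \<Longrightarrow> piece_of N A g \<in> IA N A \<and> g \<in> Gg N A (piece_of N A g)"
  using Gg_cover piece_of_eq by metis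

end


locale regL = regA +
  fixes lam :: real and iota :: "nat list \<Rightarrow> nat \<Rightarrow> nat"
  assumes lam1: "lam > 1" and viota: "valid_iota N A iota"
begin

definition fdiff :: "(nat \<Rightarrow> nat) \<Rightarrow> (nat \<Rightarrow> nat) \<Rightarrow> nat" where
  "fdiff x y = (LEAST m. x m \<noteq> y m)"

definition dm :: "(nat \<Rightarrow> nat) \<Rightarrow> (nat \<Rightarrow> nat) \<Rightarrow> real" where
  "dm x y = dmet lam x y powr log lam (real d)"

lemma dm_eq: "x \<noteq> y \<Longrightarrow> 1 / dm x y = real d ^ fdiff x y"
proof -
  assume "x \<noteq> y"
  have "dm x y = (lam powr (- real (fdiff x y))) powr log lam (real d)"
    using \<open>x \<noteq> y\<close> by (simp add: dm_def dmet_def fdiff_def)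
  also have "\<dots> = lam powr (log lam (real d) * (- real (fdiff x y)))"
    by (simp add: powr_powr mult.commute)
  also have "\<dots> = (lam powr log lam (real d)) powr (- real (fdiff x y))"
    by (simp add: powr_powr)
  also have "lam powr log lam (real d) = real d" using lam1 d_pos by simp
  finally have "dm x y = real d powr (- real (fdiff x y))" .
  thus ?thesis using d_pos by (simp add: powr_minus powr_realpow divide_inverse)
qed

lemma dm_self: "1 / dm x x = 0"
  by (simp add: dm_def dmet_def)

lemma fdiff_props:
  assumes "x \<noteq> y"
  shows "x (fdiff x y) \<noteq> y (fdiff x y)" "\<And>i. i < fdiff x y \<Longrightarrow> x i = y i"
proof -
  have ex: "\<exists>m. x m \<noteq> y m" using assms by auto
  show "x (fdiff x y) \<noteq> y (fdiff x y)" unfolding fdiff_def by (rule LeastI_ex[OF ex])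
  fix i assume "i < fdiff x y" thus "x i = y i" unfolding fdiff_def using not_less_Least by blast
qed

lemma fdiff_eqI: "x p \<noteq> y p \<Longrightarrow> (\<And>i. i < p \<Longrightarrow> x i = y i) \<Longrightarrow> fdiff x y = p"
  unfolding fdiff_def by (rule Least_equality) (auto simp: not_less[symmetric])

lemma HB_cyl: "has_bochner_integral mu (indicator (cyl N A w)) (measure mu (cyl N A w))"
proof -
  interpret prob_space mu by (rule prob_mu)
  show ?thesis by (rule has_bochner_integral_real_indicator[OF cyl_sets]) (simp add: less_top[symmetric] emeasure_finite)
qed

lemma in_cyl_map: "y \<in> OmegaA N A \<Longrightarrow> y \<in> cyl N A (map x [0..<m]) \<longleftrightarrow> (\<forall>i<m. y i = x i)"
  by (auto simp: cyl_def)

lemma meas_cyl_pos: "adm N A w \<Longrightarrow> w \<noteq> [] \<Longrightarrow> measure mu (cyl N A w) = 1 / (real N * real d ^ (length w - 1))"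
  by (rule measure_cyl)

lemma J_in:
  assumes xb: "x \<in> cyl N A \<beta>" and xw: "x \<in> cyl N A w" and K: "length \<beta> \<ge> 1"
    and KM: "length \<beta> \<le> length w"
  shows "has_bochner_integral mu
     (\<lambda>y. indicator (cyl N A \<beta>) y * (indicator (cyl N A w) x - indicator (cyl N A w) y) * (1 / dm x y))
     (real (length w - length \<beta>) * (real d - 1) / real N)"
proof -
  let ?K = "length \<beta>" and ?M = "length w"
  have xo: "x \<in> OmegaA N A" using xb by (simp add: cyl_def)
  have bx: "\<beta> = map x [0..<?K]" using xb by (simp add: in_cyl_iff)
  have wx: "w = map x [0..<?M]" using xw by (simp add: in_cyl_iff)
  define F where "F y = (\<Sum>m\<in>{?K..<?M}. real d ^ m * (indicator (cyl N A (map x [0..<m])) y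
        - indicator (cyl N A (map x [0..<Suc m])) y))" for y
  have pt: "indicator (cyl N A \<beta>) y * (indicator (cyl N A w) x - indicator (cyl N A w) y) * (1 / dm x y) = F y"
    if yo: "y \<in> OmegaA N A" for y
  proof (cases "\<forall>i<?M. y i = x i")
    case True
    hence yw: "y \<in> cyl N A w" using yo wx in_cyl_map by metis
    have "F y = 0" unfolding F_def
    proof (rule sum.neutral, rule ballI)
      fix m assume m: "m \<in> {?K..<?M}"
      have "y \<in> cyl N A (map x [0..<m])" using True m yo in_cyl_map[OF yo, of x m] by auto
      moreover have "y \<in> cyl N A (map x [0..<Suc m])" using True m in_cyl_map[OF yo, of x "Suc m"] by auto
      ultimately show "real d ^ m * (indicator (cyl N A (map x [0..<m])) y
        - indicator (cyl N A (map x [0..<Suc m])) y) = 0" by simp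
    qed
    thus ?thesis using yw xw by simp
  next
    case False
    hence xy: "x \<noteq> y" by auto
    define p where "p = fdiff x y"
    have agree: "(\<forall>i<m. y i = x i) \<longleftrightarrow> m \<le> p" for m
    proof
      assume a: "\<forall>i<m. y i = x i"
      show "m \<le> p"
      proof (rule ccontr)
        assume "\<not> m \<le> p" hence "p < m" by simp
        thus False using a fdiff_props(1)[OF xy] p_def by auto
      qed
    next
      assume "m \<le> p" thus "\<forall>i<m. y i = x i" using fdiff_props(2)[OF xy] p_def by auto
    qed
    have pM: "p < ?M" using False agree by (auto simp: not_le)
    have yw: "y \<notin> cyl N A w" using yo wx in_cyl_map False by metis
    have yb: "y \<in> cyl N A \<beta> \<longleftrightarrow> ?K \<le> p" using yo bx in_cyl_map agree by metis
    have "F y = (\<Sum>m\<in>{?K..<?M}. if m = p then real d ^ m else 0)" unfolding F_def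
    proof (rule sum.cong[OF refl])
      fix m
      have "y \<in> cyl N A (map x [0..<m]) \<longleftrightarrow> m \<le> p" using in_cyl_map[OF yo, of x m] agree by simp
      moreover have "y \<in> cyl N A (map x [0..<Suc m]) \<longleftrightarrow> Suc m \<le> p" using in_cyl_map[OF yo, of x "Suc m"] agree by simp
      ultimately show "real d ^ m * (indicator (cyl N A (map x [0..<m])) y
        - indicator (cyl N A (map x [0..<Suc m])) y) = (if m = p then real d ^ m else 0)"
        by (auto simp: indicator_def)
    qed
    also have "\<dots> = (if ?K \<le> p then real d ^ p else 0)" using pM by (simp add: sum.delta)
    finally show ?thesis using yw yb xw dm_eq[OF xy] p_def by (simp add: indicator_def)
  qed
  have HF: "has_bochner_integral mu F (\<Sum>m\<in>{?K..<?M}. real d ^ m *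
        (measure mu (cyl N A (map x [0..<m])) - measure mu (cyl N A (map x [0..<Suc m]))))"
    unfolding F_def
    by (intro has_bochner_integral_sum has_bochner_integral_mult_right has_bochner_integral_diff HB_cyl)
  have "(\<Sum>m\<in>{?K..<?M}. real d ^ m *
        (measure mu (cyl N A (map x [0..<m])) - measure mu (cyl N A (map x [0..<Suc m]))))
      = (\<Sum>m\<in>{?K..<?M}. (real d - 1) / real N)"
  proof (rule sum.cong)
    fix m assume m: "m \<in> {?K..<?M}"
    have m1: "m \<ge> 1" using m K by auto
    have "measure mu (cyl N A (map x [0..<m])) = 1 / (real N * real d ^ (m - 1))"
      using measure_cyl[OF adm_map[OF xo]] m1 by auto
    moreover have "measure mu (cyl N A (map x [0..<Suc m])) = 1 / (real N * real d ^ m)"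
      using measure_cyl[OF adm_map[OF xo], of "Suc m"] by simp
    moreover have "real d ^ m = real d * real d ^ (m - 1)" using m1
      by (metis Suc_diff_1 less_le_trans power_Suc zero_less_one)
    ultimately show "real d ^ m * (measure mu (cyl N A (map x [0..<m])) - measure mu (cyl N A (map x [0..<Suc m])))
        = (real d - 1) / real N"
      using d_pos Nge1 by (simp add: field_simps)
  qed simp
  also have "\<dots> = real (?M - ?K) * (real d - 1) / real N" by simp
  finally have HF': "has_bochner_integral mu F (real (?M - ?K) * (real d - 1) / real N)" using HF by simp
  show ?thesis
    by (subst has_bochner_integral_cong[OF refl _ refl]) (use pt HF' space_mu in auto)
qed

lemma J_out:
  assumes xb: "x \<in> cyl N A \<beta>" and xw: "x \<notin> cyl N A w" and sub: "cyl N A w \<subseteq> cyl N A \<beta>"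
    and p0: "x p0 \<noteq> w ! p0" "p0 < length w" "\<And>i. i < p0 \<Longrightarrow> x i = w ! i"
  shows "has_bochner_integral mu
     (\<lambda>y. indicator (cyl N A \<beta>) y * (indicator (cyl N A w) x - indicator (cyl N A w) y) * (1 / dm x y))
     (- (real d ^ p0 * measure mu (cyl N A w)))"
proof -
  have pt: "indicator (cyl N A \<beta>) y * (indicator (cyl N A w) x - indicator (cyl N A w) y) * (1 / dm x y)
      = - (real d ^ p0 * indicator (cyl N A w) y)" for y
  proof (cases "y \<in> cyl N A w")
    case True
    hence yb: "y \<in> cyl N A \<beta>" using sub by auto
    have xy: "x \<noteq> y" using True xw by auto
    have "fdiff x y = p0"
    proof (rule fdiff_eqI)
      show "x p0 \<noteq> y p0" using True p0 by (auto simp: cyl_def)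
      fix i assume "i < p0" thus "x i = y i" using True p0 by (auto simp: cyl_def)
    qed
    thus ?thesis using True yb xw dm_eq[OF xy] by simp
  next
    case False thus ?thesis using xw by simp
  qed
  show ?thesis unfolding pt
    by (intro has_bochner_integral_minus has_bochner_integral_mult_right HB_cyl)
qed

end


context regL begin

definition mC :: "nat list \<Rightarrow> real" where "mC \<nu> = measure mu (cyl N A \<nu>)"

definition ak :: "nat list \<Rightarrow> nat \<Rightarrow> nat \<Rightarrow> real" where
  "ak \<nu> j k = (if k \<le> j then sqrt (real d / (mC \<nu> * real j * real (Suc j)))
     else if k = Suc j then - sqrt (real j * real d / (mC \<nu> * real (Suc j))) else 0)"

definition Ck :: "nat list \<Rightarrow> nat \<Rightarrow> (nat \<Rightarrow> nat) set" where
  "Ck \<nu> k = cyl N A (\<nu> @ [iota \<nu> k])"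

definition hh :: "nat list \<Rightarrow> nat \<Rightarrow> (nat \<Rightarrow> nat) \<Rightarrow> real" where
  "hh \<nu> j y = (\<Sum>k\<in>{1..d}. ak \<nu> j k * indicator (Ck \<nu> k) y)"

lemma iota_bij: "adm N A \<nu> \<Longrightarrow> \<nu> \<noteq> [] \<Longrightarrow> bij_betw (iota \<nu>) {1..d} (Cset N A (last \<nu>))"
  using viota adm_last_lt cc_eq unfolding valid_iota_def by metis

lemma iota_in: "adm N A \<nu> \<Longrightarrow> \<nu> \<noteq> [] \<Longrightarrow> k \<in> {1..d} \<Longrightarrow> iota \<nu> k \<in> Cset N A (last \<nu>)"
  using iota_bij bij_betwE by blast

lemma iota_inj: "adm N A \<nu> \<Longrightarrow> \<nu> \<noteq> [] \<Longrightarrow> k \<in> {1..d} \<Longrightarrow> k' \<in> {1..d} \<Longrightarrow> iota \<nu> k = iota \<nu> k' \<Longrightarrow> k = k'"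
  using iota_bij bij_betw_imp_inj_on inj_onD by metis

lemma adm_snoc_iota: "adm N A \<nu> \<Longrightarrow> \<nu> \<noteq> [] \<Longrightarrow> k \<in> {1..d} \<Longrightarrow> adm N A (\<nu> @ [iota \<nu> k])"
  using iota_in[of \<nu> k] by (auto simp: adm_append1 Cset_def)

lemma mC_eq: "adm N A \<nu> \<Longrightarrow> \<nu> \<noteq> [] \<Longrightarrow> mC \<nu> = 1 / (real N * real d ^ (length \<nu> - 1))"
  unfolding mC_def by (rule measure_cyl)

lemma mC_pos: "adm N A \<nu> \<Longrightarrow> \<nu> \<noteq> [] \<Longrightarrow> mC \<nu> > 0"
  using mC_eq Nge1 d_pos by simp

lemma measure_Ck: "adm N A \<nu> \<Longrightarrow> \<nu> \<noteq> [] \<Longrightarrow> k \<in> {1..d} \<Longrightarrow> measure mu (Ck \<nu> k) = mC \<nu> / real d"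
proof -
  assume a: "adm N A \<nu>" "\<nu> \<noteq> []" "k \<in> {1..d}"
  have "measure mu (Ck \<nu> k) = 1 / (real N * real d ^ length \<nu>)"
    unfolding Ck_def using measure_cyl[OF adm_snoc_iota[OF a]] by simp
  moreover have "real d ^ length \<nu> = real d * real d ^ (length \<nu> - 1)"
    using a(2) by (cases "length \<nu>") auto
  ultimately show ?thesis using mC_eq[OF a(1,2)] by simp
qed

lemma hfun_eq:
  assumes \<nu>: "adm N A \<nu>" "\<nu> \<noteq> []" and j: "1 \<le> j" "j \<le> d - 1"
  shows "hfun N A iota \<nu> j y = hh \<nu> j y"
proof -
  let ?l = "last \<nu>"
  have l: "?l < N" using \<nu> adm_last_lt by auto
  have P: "k \<in> {1..d} \<Longrightarrow> Pm N A ?l (iota \<nu> k) = 1 / real d" for k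
    using Pm_C[OF l iota_in[OF \<nu>]] by simp
  have q: "m \<le> d \<Longrightarrow> (\<Sum>k=1..m. Pm N A ?l (iota \<nu> k)) = real m / real d" for m
  proof -
    assume "m \<le> d"
    hence "(\<Sum>k=1..m. Pm N A ?l (iota \<nu> k)) = (\<Sum>k=1..m. 1 / real d)" using P by (intro sum.cong) auto
    thus ?thesis by simp
  qed
  have jd: "Suc j \<le> d" using j d2 by simp
  have qj: "(\<Sum>k=1..j. Pm N A ?l (iota \<nu> k)) = real j / real d" using q jd by simp
  have qj1: "(\<Sum>k=1..Suc j. Pm N A ?l (iota \<nu> k)) = real (Suc j) / real d" using q jd by blast
  have Pj: "Pm N A ?l (iota \<nu> (Suc j)) = 1 / real d" using P jd by simp
  have mc: "mC \<nu> > 0" using mC_pos \<nu> by simp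
  have dpos: "real d > 0" using d_pos by simp
  have e1: "(1 / real d) / (mC \<nu> * (real j / real d) * (real (Suc j) / real d)) = real d / (mC \<nu> * real j * real (Suc j))"
    using dpos by (simp add: field_simps)
  have e2: "(real j / real d) / (mC \<nu> * (real (Suc j) / real d) * (1 / real d)) = real j * real d / (mC \<nu> * real (Suc j))"
    using dpos by (simp add: field_simps)
  have cc: "cc N A ?l = d" using cc_eq l by simp
  show ?thesis
    unfolding hfun_def hh_def Let_def cc qj qj1 Pj e1 e2 Ck_def ak_def mC_def[symmetric] by simp
qed

lemma ak_sum: assumes "1 \<le> j" "j \<le> d - 1" "mC \<nu> > 0"
  shows "(\<Sum>k\<in>{1..d}. ak \<nu> j k) = 0"
proof -
  have jd: "Suc j \<le> d" using assms d2 by simp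
  define X where "X = real d / (mC \<nu> * real (Suc j))"
  have X: "X \<ge> 0" using assms unfolding X_def by simp
  have split: "{1..d} = {1..j} \<union> {Suc j} \<union> {Suc (Suc j)..d}" using jd assms by auto
  have "(\<Sum>k\<in>{1..d}. ak \<nu> j k) = (\<Sum>k\<in>{1..j}. ak \<nu> j k) + ak \<nu> j (Suc j) + (\<Sum>k\<in>{Suc (Suc j)..d}. ak \<nu> j k)"
    unfolding split by (subst sum.union_disjoint, auto)+
  also have "(\<Sum>k\<in>{Suc (Suc j)..d}. ak \<nu> j k) = 0" by (intro sum.neutral) (auto simp: ak_def)
  also have "(\<Sum>k\<in>{1..j}. ak \<nu> j k) = real j * sqrt (X / real j)"
    by (simp add: ak_def X_def mult.assoc mult.commute mult.left_commute)
  also have "ak \<nu> j (Suc j) = - sqrt (real j * X)" by (simp add: ak_def X_def mult.assoc)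
  also have "real j * sqrt (X / real j) = sqrt (real j * X)"
  proof -
    have "sqrt (real j ^ 2 * (X / real j)) = sqrt (real j ^ 2) * sqrt (X / real j)"
      by (rule real_sqrt_mult)
    hence "real j * sqrt (X / real j) = sqrt (real j ^ 2 * (X / real j))" by simp
    also have "real j ^ 2 * (X / real j) = real j * X" using assms by (simp add: power2_eq_square)
    finally show ?thesis .
  qed
  finally show ?thesis by simp
qed

lemma ak_sq: assumes "1 \<le> j" "j \<le> d - 1" "mC \<nu> > 0"
  shows "(\<Sum>k\<in>{1..d}. (ak \<nu> j k)\<^sup>2 * (mC \<nu> / real d)) = 1"
proof -
  have jd: "Suc j \<le> d" using assms d2 by simp
  have dpos: "real d > 0" using d_pos by simp
  have split: "{1..d} = {1..j} \<union> {Suc j} \<union> {Suc (Suc j)..d}" using jd assms by auto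
  have "(\<Sum>k\<in>{1..d}. (ak \<nu> j k)\<^sup>2 * (mC \<nu> / real d)) =
     (\<Sum>k\<in>{1..j}. (ak \<nu> j k)\<^sup>2 * (mC \<nu> / real d)) + (ak \<nu> j (Suc j))\<^sup>2 * (mC \<nu> / real d)
     + (\<Sum>k\<in>{Suc (Suc j)..d}. (ak \<nu> j k)\<^sup>2 * (mC \<nu> / real d))"
    unfolding split by (subst sum.union_disjoint, auto)+
  also have "(\<Sum>k\<in>{Suc (Suc j)..d}. (ak \<nu> j k)\<^sup>2 * (mC \<nu> / real d)) = 0" by (intro sum.neutral) (auto simp: ak_def)
  also have "(\<Sum>k\<in>{1..j}. (ak \<nu> j k)\<^sup>2 * (mC \<nu> / real d)) = real j * (1 / (real j * real (Suc j)))"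
  proof -
    have jp: "real j > 0" using assms by simp
    have "k \<in> {1..j} \<Longrightarrow> (ak \<nu> j k)\<^sup>2 * (mC \<nu> / real d) = 1 / (real j * real (Suc j))" for k
    proof -
      assume "k \<in> {1..j}"
      hence "(ak \<nu> j k)\<^sup>2 = real d / (mC \<nu> * real j * real (Suc j))" using assms dpos by (simp add: ak_def)
      moreover have "real d / (mC \<nu> * real j * real (Suc j)) * (mC \<nu> / real d) = 1 / (real j * real (Suc j))"
        using assms(3) dpos by (simp add: divide_simps)
      ultimately show ?thesis by simp
    qed
    hence "(\<Sum>k\<in>{1..j}. (ak \<nu> j k)\<^sup>2 * (mC \<nu> / real d)) = (\<Sum>k\<in>{1..j}. 1 / (real j * real (Suc j)))"
      by (intro sum.cong) auto
    thus ?thesis by simp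
  qed
  also have "(ak \<nu> j (Suc j))\<^sup>2 * (mC \<nu> / real d) = real j / real (Suc j)"
  proof -
    have "(ak \<nu> j (Suc j))\<^sup>2 = real j * real d / (mC \<nu> * real (Suc j))" using assms dpos by (simp add: ak_def)
    moreover have "real j * real d / (mC \<nu> * real (Suc j)) * (mC \<nu> / real d) = real j / real (Suc j)"
      using assms(3) dpos by (simp add: divide_simps)
    ultimately show ?thesis by simp
  qed
  finally have "(\<Sum>k\<in>{1..d}. (ak \<nu> j k)\<^sup>2 * (mC \<nu> / real d)) = real j * (1 / (real j * real (Suc j))) + real j / real (Suc j)" by simp
  moreover have "real j * (1 / (real j * real (Suc j))) + real j / real (Suc j) = 1"
    using assms by (simp add: divide_simps)
  ultimately show ?thesis by linarith
qed

lemma ak1: assumes "1 \<le> j" "mC \<nu> > 0" shows "ak \<nu> j 1 > 0"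
  using assms d_pos by (simp add: ak_def)

end


context regL begin

definition evh :: "nat list \<Rightarrow> nat list \<Rightarrow> real" where
  "evh \<nu> \<beta> = (real (length \<nu> + 1 - length \<beta>) * (real d - 1) + 1) / real N"

lemma sum_delta_if:
  fixes f :: "nat \<Rightarrow> real"
  assumes "finite S" "k0 \<in> S"
  shows "(\<Sum>k\<in>S. f k * (if k = k0 then E else c)) = c * (\<Sum>k\<in>S. f k) + f k0 * (E - c)"
proof -
  have "(\<Sum>k\<in>S. f k * (if k = k0 then E else c)) = (\<Sum>k\<in>S. f k * c + (if k = k0 then f k * (E - c) else 0))"
    by (intro sum.cong) (auto simp: algebra_simps)
  also have "\<dots> = (\<Sum>k\<in>S. f k * c) + (\<Sum>k\<in>S. (if k = k0 then f k * (E - c) else 0))" by (simp add: sum.distrib)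
  also have "(\<Sum>k\<in>S. (if k = k0 then f k * (E - c) else 0)) = f k0 * (E - c)" using assms by (simp add: sum.delta)
  finally show ?thesis by (simp add: sum_distrib_left mult.commute)
qed

lemma Ck_sub: "Ck \<nu> k \<subseteq> cyl N A \<nu>" unfolding Ck_def by (rule cyl_append_sub)

lemma Dh:
  assumes ab: "(\<alpha>, \<beta>) \<in> IA N A" and \<nu>: "adm N A \<nu>" "\<nu> = \<beta> @ w" and j: "1 \<le> j" "j \<le> d - 1"
    and x: "x \<in> cyl N A \<beta>"
  shows "has_bochner_integral mu (\<lambda>y. indicator (cyl N A \<beta>) y * (hh \<nu> j x - hh \<nu> j y) * (1 / dm x y))
     (evh \<nu> \<beta> * hh \<nu> j x)"
proof -
  have bne: "\<beta> \<noteq> []" using IA_D(3)[OF ab] .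
  have nne: "\<nu> \<noteq> []" using bne \<nu>(2) by simp
  have K1: "length \<beta> \<ge> 1" using bne by (cases \<beta>) auto
  have Kn: "length \<beta> \<le> length \<nu>" using \<nu>(2) by simp
  have nb: "cyl N A \<nu> \<subseteq> cyl N A \<beta>" using \<nu>(2) cyl_append_sub by simp
  have mc: "mC \<nu> > 0" using mC_pos[OF \<nu>(1) nne] .
  have xo: "x \<in> OmegaA N A" using x by (simp add: cyl_def)
  define J where "J k y = indicator (cyl N A \<beta>) y * (indicator (Ck \<nu> k) x - indicator (Ck \<nu> k) y) * (1 / dm x y)" for k y
  have rw: "indicator (cyl N A \<beta>) y * (hh \<nu> j x - hh \<nu> j y) * (1 / dm x y) = (\<Sum>k\<in>{1..d}. ak \<nu> j k * J k y)" for y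
  proof -
    have "hh \<nu> j x - hh \<nu> j y = (\<Sum>k\<in>{1..d}. ak \<nu> j k * (indicator (Ck \<nu> k) x - indicator (Ck \<nu> k) y))"
      unfolding hh_def by (simp only: sum_subtractf[symmetric] right_diff_distrib)
    hence "indicator (cyl N A \<beta>) y * (hh \<nu> j x - hh \<nu> j y) * (1 / dm x y) =
      (\<Sum>k\<in>{1..d}. indicator (cyl N A \<beta>) y * (ak \<nu> j k * (indicator (Ck \<nu> k) x - indicator (Ck \<nu> k) y)) * (1 / dm x y))"
      by (simp only: sum_distrib_left sum_distrib_right)
    also have "\<dots> = (\<Sum>k\<in>{1..d}. ak \<nu> j k * J k y)"
      by (intro sum.cong) (simp_all add: J_def mult_ac)
    finally show ?thesis .
  qed
  have sumA: "(\<Sum>k\<in>{1..d}. ak \<nu> j k) = 0" using ak_sum[OF j mc] .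
  show ?thesis
  proof (cases "x \<in> cyl N A \<nu>")
    case True
    have xl: "x (length \<nu> - 1) = last \<nu>" using True nne by (simp add: cyl_def last_conv_nth)
    have "A (x (length \<nu> - 1)) (x (Suc (length \<nu> - 1))) = 1" using xo by (simp add: OmegaA_def)
    hence "A (last \<nu>) (x (length \<nu>)) = 1" using xl nne by simp
    hence "x (length \<nu>) \<in> Cset N A (last \<nu>)" using xo by (simp add: Cset_def OmegaA_def)
    then obtain k0 where k0: "k0 \<in> {1..d}" "iota \<nu> k0 = x (length \<nu>)"
      using iota_bij[OF \<nu>(1) nne] by (metis bij_betw_iff_bijections)
    have xk0: "x \<in> Ck \<nu> k0" unfolding Ck_def using True k0 by (simp add: cyl_snoc)
    have xk: "k \<in> {1..d} \<Longrightarrow> x \<in> Ck \<nu> k \<longleftrightarrow> k = k0" for k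
    proof
      assume "k \<in> {1..d}" "x \<in> Ck \<nu> k"
      hence "iota \<nu> k = iota \<nu> k0" using k0 by (simp add: Ck_def cyl_snoc)
      thus "k = k0" using iota_inj[OF \<nu>(1) nne] k0 \<open>k \<in> {1..d}\<close> by blast
    qed (use xk0 in simp)
    define E1 where "E1 = real (length \<nu> + 1 - length \<beta>) * (real d - 1) / real N"
    have HJ: "has_bochner_integral mu (J k) (if k = k0 then E1 else - (1 / real N))" if k: "k \<in> {1..d}" for k
    proof (cases "k = k0")
      case True
      have "has_bochner_integral mu (J k) (real (length (\<nu> @ [iota \<nu> k]) - length \<beta>) * (real d - 1) / real N)"
        unfolding J_def Ck_def
        by (rule J_in) (use x xk0 True K1 Kn in \<open>auto simp: Ck_def\<close>)
      thus ?thesis using True by (simp add: E1_def)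
    next
      case False
      have "has_bochner_integral mu (J k) (- (real d ^ length \<nu> * measure mu (cyl N A (\<nu> @ [iota \<nu> k]))))"
        unfolding J_def Ck_def
      proof (rule J_out[OF x])
        show "x \<notin> cyl N A (\<nu> @ [iota \<nu> k])" using xk[OF k] False by (simp add: Ck_def)
        show "cyl N A (\<nu> @ [iota \<nu> k]) \<subseteq> cyl N A \<beta>" using Ck_sub[of \<nu> k] nb by (auto simp: Ck_def)
        show "x (length \<nu>) \<noteq> (\<nu> @ [iota \<nu> k]) ! length \<nu>"
          using k0 iota_inj[OF \<nu>(1) nne k k0(1)] False by auto
        show "length \<nu> < length (\<nu> @ [iota \<nu> k])" by simp
        fix i assume "i < length \<nu>" thus "x i = (\<nu> @ [iota \<nu> k]) ! i" using True by (simp add: cyl_def nth_append)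
      qed
      moreover have "real d ^ length \<nu> * measure mu (cyl N A (\<nu> @ [iota \<nu> k])) = 1 / real N"
      proof -
        have "measure mu (cyl N A (\<nu> @ [iota \<nu> k])) = 1 / (real N * real d ^ length \<nu>)"
          using measure_cyl[OF adm_snoc_iota[OF \<nu>(1) nne k]] by simp
        thus ?thesis using d_pos by simp
      qed
      ultimately show ?thesis using False by simp
    qed
    have "has_bochner_integral mu (\<lambda>y. \<Sum>k\<in>{1..d}. ak \<nu> j k * J k y)
        (\<Sum>k\<in>{1..d}. ak \<nu> j k * (if k = k0 then E1 else - (1 / real N)))"
      by (intro has_bochner_integral_sum has_bochner_integral_mult_right HJ)
    moreover have "(\<Sum>k\<in>{1..d}. ak \<nu> j k * (if k = k0 then E1 else - (1 / real N))) = ak \<nu> j k0 * (E1 + 1 / real N)"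
      using sum_delta_if[of "{1..d}" k0 "ak \<nu> j" E1 "- (1 / real N)"] k0 sumA by simp
    moreover have "hh \<nu> j x = ak \<nu> j k0"
    proof -
      have "hh \<nu> j x = (\<Sum>k\<in>{1..d}. if k = k0 then ak \<nu> j k else 0)"
        unfolding hh_def by (intro sum.cong) (use xk in auto)
      thus ?thesis using k0 by simp
    qed
    moreover have "E1 + 1 / real N = evh \<nu> \<beta>" unfolding E1_def evh_def by (simp add: add_divide_distrib)
    ultimately show ?thesis using rw by (simp add: mult.commute)
  next
    case False
    have "\<exists>i<length \<nu>. x i \<noteq> \<nu> ! i" using False xo by (auto simp: cyl_def)
    define p0 where "p0 = (LEAST i. i < length \<nu> \<and> x i \<noteq> \<nu> ! i)"
    have p0: "p0 < length \<nu> \<and> x p0 \<noteq> \<nu> ! p0" unfolding p0_def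
      by (rule LeastI_ex) (use \<open>\<exists>i<length \<nu>. x i \<noteq> \<nu> ! i\<close> in blast)
    have p0m: "i < p0 \<Longrightarrow> x i = \<nu> ! i" for i
      using not_less_Least[of i "\<lambda>i. i < length \<nu> \<and> x i \<noteq> \<nu> ! i"] p0 unfolding p0_def[symmetric] by auto
    define c where "c = - (real d ^ p0 * (mC \<nu> / real d))"
    have HJ: "has_bochner_integral mu (J k) c" if k: "k \<in> {1..d}" for k
    proof -
      have "has_bochner_integral mu (J k) (- (real d ^ p0 * measure mu (cyl N A (\<nu> @ [iota \<nu> k]))))"
        unfolding J_def Ck_def
      proof (rule J_out[OF x])
        show "x \<notin> cyl N A (\<nu> @ [iota \<nu> k])" using False cyl_append_sub by blast
        show "cyl N A (\<nu> @ [iota \<nu> k]) \<subseteq> cyl N A \<beta>" using Ck_sub[of \<nu> k] nb by (auto simp: Ck_def)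
        show "x p0 \<noteq> (\<nu> @ [iota \<nu> k]) ! p0" using p0 by (simp add: nth_append)
        show "p0 < length (\<nu> @ [iota \<nu> k])" using p0 by simp
        fix i assume "i < p0" thus "x i = (\<nu> @ [iota \<nu> k]) ! i" using p0m p0 by (simp add: nth_append)
      qed
      thus ?thesis using measure_Ck[OF \<nu>(1) nne k] by (simp add: c_def Ck_def)
    qed
    have "has_bochner_integral mu (\<lambda>y. \<Sum>k\<in>{1..d}. ak \<nu> j k * J k y) (\<Sum>k\<in>{1..d}. ak \<nu> j k * c)"
      by (intro has_bochner_integral_sum has_bochner_integral_mult_right HJ)
    moreover have "(\<Sum>k\<in>{1..d}. ak \<nu> j k * c) = 0" using sumA by (simp add: sum_distrib_right[symmetric])
    moreover have "hh \<nu> j x = 0" unfolding hh_def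
    proof (intro sum.neutral ballI)
      fix k assume "k \<in> {1..d}"
      have "x \<notin> Ck \<nu> k" using False Ck_sub[of \<nu> k] by blast
      thus "ak \<nu> j k * indicator (Ck \<nu> k) x = 0" by simp
    qed
    ultimately show ?thesis using rw by simp
  qed
qed

end


context regL begin

definition EV :: "bidx \<Rightarrow> real" where
  "EV b = (case b of Eg \<gamma> \<Rightarrow> Lval N A \<gamma> | Eh \<gamma> \<nu> j \<Rightarrow> Lval N A \<gamma> + evh \<nu> (snd \<gamma>))"

lemma bidx_Eg: "Eg \<gamma> \<in> bidx_set N A \<longleftrightarrow> \<gamma> \<in> IA N A"
  by (auto simp: bidx_set_def)

lemma bidx_Eh: "Eh \<gamma> \<nu> j \<in> bidx_set N A \<Longrightarrow>
   \<gamma> \<in> IA N A \<and> adm N A \<nu> \<and> (\<exists>w. \<nu> = snd \<gamma> @ w) \<and> \<nu> \<noteq> [] \<and> 1 \<le> j \<and> j \<le> d - 1"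
proof -
  assume a: "Eh \<gamma> \<nu> j \<in> bidx_set N A"
  hence b: "\<gamma> \<in> IA N A" "adm N A \<nu>" "\<exists>w. \<nu> = snd \<gamma> @ w" "1 \<le> j" "j \<le> cc N A (last \<nu>) - 1"
    by (auto simp: bidx_set_def)
  have "snd \<gamma> \<noteq> []" using b(1) by (auto simp: IA_def)
  hence ne: "\<nu> \<noteq> []" using b(3) by auto
  have "cc N A (last \<nu>) = d" using cc_eq adm_last_lt[OF b(2) ne] by simp
  thus ?thesis using b ne by simp
qed

lemma hh_at: assumes "adm N A \<nu>" "\<nu> \<noteq> []" "k0 \<in> {1..d}" "y \<in> Ck \<nu> k0"
  shows "hh \<nu> j y = ak \<nu> j k0"
proof -
  have xk: "k \<in> {1..d} \<Longrightarrow> y \<in> Ck \<nu> k \<longleftrightarrow> k = k0" for k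
  proof
    assume "k \<in> {1..d}" "y \<in> Ck \<nu> k"
    hence "iota \<nu> k = iota \<nu> k0" using assms(4) by (simp add: Ck_def cyl_snoc)
    thus "k = k0" using iota_inj[OF assms(1,2)] assms(3) \<open>k \<in> {1..d}\<close> by blast
  qed (use assms(4) in simp)
  have "hh \<nu> j y = (\<Sum>k\<in>{1..d}. if k = k0 then ak \<nu> j k else 0)"
    unfolding hh_def by (intro sum.cong) (use xk in auto)
  thus ?thesis using assms(3) by simp
qed

lemma Delta_gen:
  assumes g: "\<gamma> \<in> IA N A" "g \<in> Gg N A \<gamma>" and f: "\<And>z. z \<in> Gg N A \<gamma> \<Longrightarrow> f z = complex_of_real (H (src z))"
  shows "Delta_piece N A lam \<gamma> f g =
     complex_of_real (\<integral>y. indicator (cyl N A (snd \<gamma>)) y * (H (src g) - H y) * (1 / dm (src g) y) \<partial>mu)"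
proof -
  have fg: "f g = complex_of_real (H (src g))" using f g by simp
  have "Delta_piece N A lam \<gamma> f g = (\<integral>y. complex_of_real (indicator (cyl N A (snd \<gamma>)) y * (H (src g) - H y) * (1 / dm (src g) y)) \<partial>mu)"
    unfolding Delta_piece_def
  proof (rule Bochner_Integration.integral_cong[OF refl])
    fix y assume "y \<in> space mu"
    show "indicator (cyl N A (snd \<gamma>)) y * ((f g - f (sinv \<gamma> y)) / complex_of_real (dmet lam (src g) y powr log lam (lamA N A)))
      = complex_of_real (indicator (cyl N A (snd \<gamma>)) y * (H (src g) - H y) * (1 / dm (src g) y))"
    proof (cases "y \<in> cyl N A (snd \<gamma>)")
      case True
      have "f (sinv \<gamma> y) = complex_of_real (H y)" using f sinv_Gg[OF g(1) True] by simp
      thus ?thesis using True fg by (simp add: dm_def lamA_eq)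
    qed simp
  qed
  thus ?thesis by (simp only: integral_complex_of_real)
qed

lemma Delta_other:
  assumes g: "\<gamma> \<in> IA N A" "g \<in> Gg N A \<gamma>" and f: "\<And>z. z \<in> Gg N A \<gamma> \<Longrightarrow> f z = 0"
  shows "Delta_piece N A lam \<gamma> f g = 0"
proof -
  have "Delta_piece N A lam \<gamma> f g = (\<integral>y. 0 \<partial>mu)"
    unfolding Delta_piece_def
  proof (rule Bochner_Integration.integral_cong[OF refl])
    fix y assume "y \<in> space mu"
    show "indicator (cyl N A (snd \<gamma>)) y * ((f g - f (sinv \<gamma> y)) / complex_of_real (dmet lam (src g) y powr log lam (lamA N A))) = 0"
    proof (cases "y \<in> cyl N A (snd \<gamma>)")
      case True
      thus ?thesis using f g sinv_Gg[OF g(1) True] by simp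
    qed simp
  qed
  thus ?thesis by simp
qed

lemma eb_Eg: "ebasis N A iota (Eg \<gamma>) g = (if g \<in> Gg N A \<gamma> then complex_of_real (1 / sqrt (mC (snd \<gamma>))) else 0)"
  by (simp add: ebasis_def mC_def)

lemma eb_Eh: "Eh \<gamma> \<nu> j \<in> bidx_set N A \<Longrightarrow>
   ebasis N A iota (Eh \<gamma> \<nu> j) g = (if g \<in> Gg N A \<gamma> then complex_of_real (hh \<nu> j (src g)) else 0)"
  using bidx_Eh hfun_eq by (simp add: ebasis_def)

definition bgam :: "bidx \<Rightarrow> nat list \<times> nat list" where
  "bgam b = (case b of Eg \<gamma> \<Rightarrow> \<gamma> | Eh \<gamma> \<nu> j \<Rightarrow> \<gamma>)"

lemma bgam_IA: "b \<in> bidx_set N A \<Longrightarrow> bgam b \<in> IA N A"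
  by (cases b) (auto simp: bgam_def bidx_Eg dest: bidx_Eh)

lemma eb_out: "g \<notin> Gg N A (bgam b) \<Longrightarrow> ebasis N A iota b g = 0"
  by (cases b) (auto simp: bgam_def ebasis_def)

lemma eigen_eq:
  assumes b: "b \<in> bidx_set N A" and g: "g \<in> GA N A"
  shows "absD N A lam (ebasis N A iota b) g = complex_of_real (EV b) * ebasis N A iota b g"
proof -
  define \<gamma>' where "\<gamma>' = piece_of N A g"
  have pg: "\<gamma>' \<in> IA N A" "g \<in> Gg N A \<gamma>'" using piece_of_IA[OF g] \<gamma>'_def by auto
  have aD: "absD N A lam (ebasis N A iota b) g =
      Delta_piece N A lam \<gamma>' (ebasis N A iota b) g + complex_of_real (Lval N A \<gamma>') * ebasis N A iota b g"
    using g by (simp add: absD_def \<gamma>'_def Let_def)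
  show ?thesis
  proof (cases "\<gamma>' = bgam b")
    case False
    have z: "z \<in> Gg N A \<gamma>' \<Longrightarrow> ebasis N A iota b z = 0" for z
      using Gg_unique[of z \<gamma>' "bgam b"] pg bgam_IA[OF b] False eb_out by blast
    have "Delta_piece N A lam \<gamma>' (ebasis N A iota b) g = 0" by (rule Delta_other[OF pg]) (rule z)
    thus ?thesis using aD z[OF pg(2)] by simp
  next
    case True
    show ?thesis
    proof (cases b)
      case (Eg \<gamma>)
      hence gam: "\<gamma>' = \<gamma>" using True by (simp add: bgam_def)
      have "Delta_piece N A lam \<gamma>' (ebasis N A iota b) g =
         complex_of_real (\<integral>y. indicator (cyl N A (snd \<gamma>')) y * ((\<lambda>_. 1 / sqrt (mC (snd \<gamma>))) (src g) - (\<lambda>_. 1 / sqrt (mC (snd \<gamma>))) y) * (1 / dm (src g) y) \<partial>mu)"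
        by (rule Delta_gen[OF pg]) (simp add: Eg eb_Eg gam)
      hence "Delta_piece N A lam \<gamma>' (ebasis N A iota b) g = 0" by simp
      thus ?thesis using aD by (simp add: EV_def Eg gam)
    next
      case (Eh \<gamma> \<nu> j)
      have gam: "\<gamma>' = \<gamma>" using True Eh by (simp add: bgam_def)
      obtain \<alpha> \<beta> where ab: "\<gamma> = (\<alpha>, \<beta>)" by (cases \<gamma>)
      have bb: "Eh \<gamma> \<nu> j \<in> bidx_set N A" using b Eh by simp
      note bh = bidx_Eh[OF bb]
      obtain w where w: "\<nu> = \<beta> @ w" using bh ab by auto
      have x: "src g \<in> cyl N A \<beta>" using Gg_D(1)[OF pg(2)] gam ab by simp
      have "Delta_piece N A lam \<gamma>' (ebasis N A iota b) g =
         complex_of_real (\<integral>y. indicator (cyl N A (snd \<gamma>')) y * (hh \<nu> j (src g) - hh \<nu> j y) * (1 / dm (src g) y) \<partial>mu)"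
        by (rule Delta_gen[OF pg]) (simp add: Eh eb_Eh[OF bb] gam)
      also have "(\<integral>y. indicator (cyl N A (snd \<gamma>')) y * (hh \<nu> j (src g) - hh \<nu> j y) * (1 / dm (src g) y) \<partial>mu)
          = evh \<nu> \<beta> * hh \<nu> j (src g)"
        using Dh[of \<alpha> \<beta> \<nu> w j "src g"] bh ab w x gam has_bochner_integral_integral_eq by auto
      finally have "Delta_piece N A lam \<gamma>' (ebasis N A iota b) g = complex_of_real (evh \<nu> \<beta> * hh \<nu> j (src g))" .
      moreover have "ebasis N A iota b g = complex_of_real (hh \<nu> j (src g))" using pg gam Eh eb_Eh[OF bb] by simp
      ultimately show ?thesis using aD gam ab Eh by (simp add: EV_def algebra_simps)
    qed
  qed
qed

lemma eb_nonzero: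
  assumes b: "b \<in> bidx_set N A"
  shows "\<exists>g\<in>GA N A. ebasis N A iota b g \<noteq> 0"
proof (cases b)
  case (Eg \<gamma>)
  hence g: "\<gamma> \<in> IA N A" using b bidx_Eg by simp
  obtain \<alpha> \<beta> where ab: "\<gamma> = (\<alpha>, \<beta>)" by (cases \<gamma>)
  have bb: "adm N A \<beta>" "\<beta> \<noteq> []" using IA_D[OF g[unfolded ab]] by auto
  obtain y where y: "y \<in> cyl N A \<beta>" using cyl_nonempty[OF bb] by auto
  have "sinv \<gamma> y \<in> Gg N A \<gamma>" using sinv_Gg[OF g] y ab by simp
  moreover have "sinv \<gamma> y \<in> GA N A" using sinv_GA[OF g] y ab by simp
  moreover have "mC \<beta> > 0" using mC_pos[OF bb] .
  ultimately show ?thesis using Eg ab by (intro bexI[of _ "sinv \<gamma> y"]) (auto simp: eb_Eg)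
next
  case (Eh \<gamma> \<nu> j)
  have bb: "Eh \<gamma> \<nu> j \<in> bidx_set N A" using b Eh by simp
  note bh = bidx_Eh[OF bb]
  obtain \<alpha> \<beta> where ab: "\<gamma> = (\<alpha>, \<beta>)" by (cases \<gamma>)
  obtain w where w: "\<nu> = \<beta> @ w" using bh ab by auto
  have one: "(1::nat) \<in> {1..d}" using d_pos by simp
  obtain y where y: "y \<in> Ck \<nu> 1"
    using cyl_nonempty[OF adm_snoc_iota[OF _ _ one]] bh unfolding Ck_def by blast
  have yb: "y \<in> cyl N A \<beta>" using y Ck_sub[of \<nu> 1] w cyl_append_sub[of \<beta> w] by blast
  have g: "\<gamma> \<in> IA N A" using bh by simp
  have "sinv \<gamma> y \<in> Gg N A \<gamma>" using sinv_Gg[OF g] yb ab by simp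
  moreover have "sinv \<gamma> y \<in> GA N A" using sinv_GA[OF g] yb ab by simp
  moreover have "hh \<nu> j y = ak \<nu> j 1" using hh_at[OF _ _ one y] bh by simp
  moreover have "ak \<nu> j 1 > 0" using ak1[of j \<nu>] bh mC_pos by simp
  ultimately show ?thesis using Eh eb_Eh[OF bb] by (intro bexI[of _ "sinv \<gamma> y"]) auto
qed

lemma eigval_eq:
  assumes b: "b \<in> bidx_set N A"
  shows "eigval N A lam iota b = EV b"
  unfolding eigval_def
proof (rule the_equality)
  show "\<forall>g\<in>GA N A. absD N A lam (ebasis N A iota b) g = complex_of_real (EV b) * ebasis N A iota b g"
    using eigen_eq[OF b] by blast
  fix m assume m: "\<forall>g\<in>GA N A. absD N A lam (ebasis N A iota b) g = complex_of_real m * ebasis N A iota b g"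
  obtain g where g: "g \<in> GA N A" "ebasis N A iota b g \<noteq> 0" using eb_nonzero[OF b] by blast
  have "complex_of_real m * ebasis N A iota b g = complex_of_real (EV b) * ebasis N A iota b g"
    using m eigen_eq[OF b g(1)] g(1) by simp
  thus "m = EV b" using g(2) by simp
qed

end


context regL begin

lemma shift1_Omega: "x \<in> OmegaA N A \<Longrightarrow> shift1 x \<in> OmegaA N A"
  by (simp add: shift1_def OmegaA_shiftk)

lemma shift1_apply[simp]: "shift1 x n = x (Suc n)" by (simp add: shift1_def)

lemma GA_S: "x \<in> OmegaA N A \<Longrightarrow> (x, 1, shift1 x) \<in> GA N A"
proof -
  assume x: "x \<in> OmegaA N A"
  have "(1::int) + int 0 \<ge> 0 \<and> shiftk (nat (1 + int 0)) x = shiftk 0 (shift1 x)"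
    by (simp add: fun_eq_iff)
  thus ?thesis using x shift1_Omega[OF x] unfolding GA_def by blast
qed

lemma GA_Sstar: "x \<in> OmegaA N A \<Longrightarrow> (shift1 x, -1, x) \<in> GA N A"
proof -
  assume x: "x \<in> OmegaA N A"
  have "(-1::int) + int 1 \<ge> 0 \<and> shiftk (nat (-1 + int 1)) (shift1 x) = shiftk 1 x"
    by (simp add: fun_eq_iff)
  thus ?thesis using x shift1_Omega[OF x] unfolding GA_def by blast
qed

lemma genact_True:
  assumes x: "x \<in> OmegaA N A"
  shows "genact N A True i \<eta> (x, n, y) = (if x 0 = i then \<eta> (shift1 x, n - 1, y) else 0)"
proof -
  let ?h0 = "(x, 1::int, shift1 x)"
  have "genact N A True i \<eta> (x, n, y) =
    infsum (\<lambda>h. indicator (genset N A True i) h * \<eta> (gmul (ginv h) (x, n, y))) {h \<in> GA N A. fst h = x}"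
    by (simp add: genact_def conv_def)
  also have "\<dots> = infsum (\<lambda>h. indicator (genset N A True i) h * \<eta> (gmul (ginv h) (x, n, y)))
        (if x 0 = i then {?h0} else {})"
  proof (rule infsum_cong_neutral)
    fix h assume h: "h \<in> {h \<in> GA N A. fst h = x} - (if x 0 = i then {?h0} else {})"
    show "indicator (genset N A True i) h * \<eta> (gmul (ginv h) (x, n, y)) = 0"
    proof (cases "h \<in> genset N A True i")
      case True
      then obtain x' where "h = (x', 1, shift1 x')" "x' \<in> cyl N A [i]" by (auto simp: genset_def)
      moreover hence "x' = x" "x 0 = i" using h by (auto simp: cyl_def)
      ultimately show ?thesis using h by simp
    qed simp
  next
    fix h assume h: "h \<in> (if x 0 = i then {?h0} else {}) - {h \<in> GA N A. fst h = x}"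
    thus "indicator (genset N A True i) h * \<eta> (gmul (ginv h) (x, n, y)) = 0"
      using GA_S[OF x] by (auto split: if_splits)
  qed simp
  also have "\<dots> = (if x 0 = i then \<eta> (shift1 x, n - 1, y) else 0)"
  proof (cases "x 0 = i")
    case True
    have "?h0 \<in> genset N A True i" using True x by (auto simp: genset_def cyl_def)
    thus ?thesis using True by (simp add: gmul_def ginv_def)
  qed simp
  finally show ?thesis .
qed

lemma genact_False:
  assumes x: "x \<in> OmegaA N A" and xi: "x 0 = i"
  shows "genact N A False i \<xi> (shift1 x, m, y) = \<xi> (x, m + 1, y)"
proof -
  let ?h0 = "(shift1 x, -1::int, x)"
  have "genact N A False i \<xi> (shift1 x, m, y) =
    infsum (\<lambda>h. indicator (genset N A False i) h * \<xi> (gmul (ginv h) (shift1 x, m, y))) {h \<in> GA N A. fst h = shift1 x}"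
    by (simp add: genact_def conv_def)
  also have "\<dots> = infsum (\<lambda>h. indicator (genset N A False i) h * \<xi> (gmul (ginv h) (shift1 x, m, y))) {?h0}"
  proof (rule infsum_cong_neutral)
    fix h assume h: "h \<in> {h \<in> GA N A. fst h = shift1 x} - {?h0}"
    show "indicator (genset N A False i) h * \<xi> (gmul (ginv h) (shift1 x, m, y)) = 0"
    proof (cases "h \<in> genset N A False i")
      case True
      then obtain x' where h': "h = (shift1 x', -1, x')" "x' \<in> cyl N A [i]" by (auto simp: genset_def)
      have "shift1 x' = shift1 x" using h h' by auto
      moreover have "x' 0 = x 0" using h'(2) xi by (auto simp: cyl_def)
      ultimately have "x' = x" by (metis fun_eq_iff not0_implies_Suc shift1_apply)
      thus ?thesis using h h' by simp
    qed simp
  next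
    fix h assume h: "h \<in> {?h0} - {h \<in> GA N A. fst h = shift1 x}"
    thus "indicator (genset N A False i) h * \<xi> (gmul (ginv h) (shift1 x, m, y)) = 0"
      using GA_Sstar[OF x] by auto
  qed simp
  also have "\<dots> = \<xi> (x, m + 1, y)"
  proof -
    have "?h0 \<in> genset N A False i" using xi x by (auto simp: genset_def cyl_def)
    thus ?thesis by (simp add: gmul_def ginv_def add.commute)
  qed
  finally show ?thesis .
qed

definition Pw :: "nat \<Rightarrow> (bool \<times> nat) list" where "Pw i = [(True, i), (False, i)]"

lemma Pw_eval:
  assumes x: "x \<in> OmegaA N A"
  shows "wordact N A (Pw i) \<xi> (x, n, y) = (if x 0 = i then \<xi> (x, n, y) else 0)"
proof -
  have "wordact N A (Pw i) \<xi> (x, n, y) = genact N A True i (genact N A False i \<xi>) (x, n, y)"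
    by (simp add: Pw_def)
  also have "\<dots> = (if x 0 = i then genact N A False i \<xi> (shift1 x, n - 1, y) else 0)"
    by (rule genact_True[OF x])
  also have "\<dots> = (if x 0 = i then \<xi> (x, n, y) else 0)"
    using genact_False[OF x, of i \<xi> "n - 1" y] by simp
  finally show ?thesis .
qed

end


context regL begin

definition FL :: "nat list \<times> nat list \<Rightarrow> nat" where
  "FL \<gamma> = (if fst \<gamma> \<noteq> [] then fst \<gamma> ! 0 else last (snd \<gamma>))"

lemma fst_sinv_0:
  assumes g: "\<gamma> \<in> IA N A" and y: "y \<in> cyl N A (snd \<gamma>)"
  shows "fst (sinv \<gamma> y) 0 = FL \<gamma>"
proof -
  obtain \<alpha> \<beta> where ab: "\<gamma> = (\<alpha>, \<beta>)" by (cases \<gamma>)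
  have bne: "\<beta> \<noteq> []" using IA_D(3) g ab by simp
  have "y (length \<beta> - 1) = last \<beta>" using y bne ab by (auto simp: cyl_def last_conv_nth)
  thus ?thesis using ab by (auto simp: FL_def sinv_def prep_def)
qed

lemma FL_lt: "\<gamma> \<in> IA N A \<Longrightarrow> FL \<gamma> < N"
proof -
  assume g: "\<gamma> \<in> IA N A"
  obtain \<alpha> \<beta> where ab: "\<gamma> = (\<alpha>, \<beta>)" by (cases \<gamma>)
  show ?thesis using IA_D[OF g[unfolded ab]] adm_last_lt[of \<beta>] adm_nth_lt[of \<alpha> 0] ab
    by (auto simp: FL_def)
qed

lemma Pw_sinv:
  assumes g: "\<gamma> \<in> IA N A" and y: "y \<in> cyl N A (snd \<gamma>)"
  shows "wordact N A (Pw i) \<xi> (sinv \<gamma> y) = (if FL \<gamma> = i then \<xi> (sinv \<gamma> y) else 0)"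
proof -
  obtain \<alpha> \<beta> where ab: "\<gamma> = (\<alpha>, \<beta>)" by (cases \<gamma>)
  have xo: "fst (sinv \<gamma> y) \<in> OmegaA N A" using fst_sinv_Omega[of \<alpha> \<beta> y] g y ab by (simp add: sinv_def)
  have "sinv \<gamma> y = (fst (sinv \<gamma> y), fst (snd (sinv \<gamma> y)), snd (snd (sinv \<gamma> y)))" by simp
  hence "wordact N A (Pw i) \<xi> (sinv \<gamma> y) = (if fst (sinv \<gamma> y) 0 = i then \<xi> (sinv \<gamma> y) else 0)"
    using Pw_eval[OF xo, of i \<xi> "fst (snd (sinv \<gamma> y))" "snd (snd (sinv \<gamma> y))"] by metis
  thus ?thesis using fst_sinv_0[OF g y] by simp
qed

lemma Pw_ind:
  assumes g: "\<gamma> \<in> IA N A"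
  shows "indicator (cyl N A (snd \<gamma>)) y * wordact N A (Pw i) \<xi> (sinv \<gamma> y) =
     (if FL \<gamma> = i then 1 else 0) * (indicator (cyl N A (snd \<gamma>)) y * \<xi> (sinv \<gamma> y))"
  by (cases "y \<in> cyl N A (snd \<gamma>)") (auto simp: Pw_sinv[OF g])

lemma norm2sq_zero: "norm2sq N A (\<lambda>g. 0) = 0"
  by (simp add: norm2sq_def)

lemma Pw_OA: "wordact N A (Pw i) \<in> OA N A"
  unfolding OA_def mem_Collect_eq
proof (intro conjI)
  show "\<forall>\<xi>. L2 N A \<xi> \<longrightarrow> L2 N A (wordact N A (Pw i) \<xi>)"
  proof (intro allI impI)
  fix \<xi> assume L: "L2 N A \<xi>"
  show "L2 N A (wordact N A (Pw i) \<xi>)"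
    unfolding L2_def
  proof (intro conjI ballI)
    fix \<gamma> assume g: "\<gamma> \<in> IA N A"
    have "\<forall>\<gamma>\<in>IA N A. (\<lambda>y. indicator (cyl N A (snd \<gamma>)) y * \<xi> (sinv \<gamma> y)) \<in> borel_measurable mu"
      using L unfolding L2_def by (rule conjunct1)
    hence "(\<lambda>y. indicator (cyl N A (snd \<gamma>)) y * \<xi> (sinv \<gamma> y)) \<in> borel_measurable mu"
      using g by (rule bspec)
    hence "(\<lambda>y. (if FL \<gamma> = i then 1 else 0) * (indicator (cyl N A (snd \<gamma>)) y * \<xi> (sinv \<gamma> y))) \<in> borel_measurable mu"
      by (rule borel_measurable_times[OF borel_measurable_const])
    thus "(\<lambda>y. indicator (cyl N A (snd \<gamma>)) y * wordact N A (Pw i) \<xi> (sinv \<gamma> y)) \<in> borel_measurable mu"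
      unfolding Pw_ind[OF g] .
  next
    have "norm2sq N A (wordact N A (Pw i) \<xi>) \<le> norm2sq N A \<xi>"
      unfolding norm2sq_def
    proof (rule nn_integral_mono)
      fix \<gamma> assume "\<gamma> \<in> space (count_space (IA N A))"
      hence g: "\<gamma> \<in> IA N A" by simp
      show "(\<integral>\<^sup>+y. indicator (cyl N A (snd \<gamma>)) y * ennreal ((cmod (wordact N A (Pw i) \<xi> (sinv \<gamma> y)))\<^sup>2) \<partial>mu)
          \<le> (\<integral>\<^sup>+y. indicator (cyl N A (snd \<gamma>)) y * ennreal ((cmod (\<xi> (sinv \<gamma> y)))\<^sup>2) \<partial>mu)"
      proof (rule nn_integral_mono)
        fix y
        show "indicator (cyl N A (snd \<gamma>)) y * ennreal ((cmod (wordact N A (Pw i) \<xi> (sinv \<gamma> y)))\<^sup>2)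
          \<le> indicator (cyl N A (snd \<gamma>)) y * ennreal ((cmod (\<xi> (sinv \<gamma> y)))\<^sup>2)"
          by (cases "y \<in> cyl N A (snd \<gamma>)") (auto simp: Pw_sinv[OF g])
      qed
    qed
    moreover have "norm2sq N A \<xi> < \<infinity>" using L unfolding L2_def by (rule conjunct2)
    ultimately show "norm2sq N A (wordact N A (Pw i) \<xi>) < \<infinity>" by (rule le_less_trans)
  qed
  qed
next
  show "\<forall>\<epsilon>>0. \<exists>p. \<forall>\<xi>. L2 N A \<xi> \<longrightarrow>
          norm2sq N A (\<lambda>g. wordact N A (Pw i) \<xi> g - polyact N A p \<xi> g) \<le> ennreal (\<epsilon>\<^sup>2) * norm2sq N A \<xi>"
  proof (intro allI impI)
  fix \<epsilon> :: real assume "\<epsilon> > 0"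
  show "\<exists>p. \<forall>\<xi>. L2 N A \<xi> \<longrightarrow>
          norm2sq N A (\<lambda>g. wordact N A (Pw i) \<xi> g - polyact N A p \<xi> g) \<le> ennreal (\<epsilon>\<^sup>2) * norm2sq N A \<xi>"
  proof (intro exI[of _ "[(1, Pw i)]"] allI impI)
    fix \<xi>
    have "(\<lambda>g. wordact N A (Pw i) \<xi> g - polyact N A [(1, Pw i)] \<xi> g) = (\<lambda>g. 0)"
      by (simp add: polyact_def)
    thus "norm2sq N A (\<lambda>g. wordact N A (Pw i) \<xi> g - polyact N A [(1, Pw i)] \<xi> g) \<le> ennreal (\<epsilon>\<^sup>2) * norm2sq N A \<xi>"
      by (simp add: norm2sq_zero)
  qed
  qed
qed

end


context regL begin

lemma Ck_disj: assumes "adm N A \<nu>" "\<nu> \<noteq> []" "k0 \<in> {1..d}" "y \<in> Ck \<nu> k0" "k \<in> {1..d}"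
  shows "y \<in> Ck \<nu> k \<longleftrightarrow> k = k0"
proof
  assume "y \<in> Ck \<nu> k"
  hence "iota \<nu> k = iota \<nu> k0" using assms(4) by (simp add: Ck_def cyl_snoc)
  thus "k = k0" using iota_inj[OF assms(1,2)] assms(3,5) by blast
qed (use assms(4) in simp)

lemma NRM:
  assumes b: "b \<in> bidx_set N A"
  shows "has_bochner_integral mu
    (\<lambda>y. indicator (cyl N A (snd (bgam b))) y * (cmod (ebasis N A iota b (sinv (bgam b) y)))\<^sup>2) 1"
proof (cases b)
  case (Eg \<gamma>)
  hence g: "\<gamma> \<in> IA N A" using b bidx_Eg by simp
  obtain \<alpha> \<beta> where ab: "\<gamma> = (\<alpha>, \<beta>)" by (cases \<gamma>)
  have bb: "adm N A \<beta>" "\<beta> \<noteq> []" using IA_D[OF g[unfolded ab]] by auto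
  have mc: "mC \<beta> > 0" using mC_pos[OF bb] .
  have pt: "indicator (cyl N A (snd (bgam b))) y * (cmod (ebasis N A iota b (sinv (bgam b) y)))\<^sup>2
      = indicator (cyl N A \<beta>) y * (1 / mC \<beta>)" for y
  proof (cases "y \<in> cyl N A \<beta>")
    case True
    have "sinv \<gamma> y \<in> Gg N A \<gamma>" using sinv_Gg[OF g] True ab by simp
    moreover have "cmod (1 / complex_of_real (sqrt (mC \<beta>))) = 1 / sqrt (mC \<beta>)" using mc by (simp add: norm_divide)
    moreover have "(1 / sqrt (mC \<beta>))\<^sup>2 = 1 / mC \<beta>" using mc by (simp add: power_divide)
    ultimately show ?thesis using True Eg ab mc by (simp add: bgam_def eb_Eg)
  qed (simp add: Eg ab bgam_def)
  have "has_bochner_integral mu (\<lambda>y. indicator (cyl N A \<beta>) y * (1 / mC \<beta>)) (measure mu (cyl N A \<beta>) * (1 / mC \<beta>))"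
    by (rule has_bochner_integral_mult_left[OF HB_cyl])
  thus ?thesis unfolding pt using mc by (simp add: mC_def)
next
  case (Eh \<gamma> \<nu> j)
  have bb: "Eh \<gamma> \<nu> j \<in> bidx_set N A" using b Eh by simp
  note bh = bidx_Eh[OF bb]
  obtain \<alpha> \<beta> where ab: "\<gamma> = (\<alpha>, \<beta>)" by (cases \<gamma>)
  obtain w where w: "\<nu> = \<beta> @ w" using bh ab by auto
  have g: "\<gamma> \<in> IA N A" using bh by simp
  have nb: "cyl N A \<nu> \<subseteq> cyl N A \<beta>" using w cyl_append_sub by simp
  have mc: "mC \<nu> > 0" using mC_pos bh by simp
  have pt: "indicator (cyl N A (snd (bgam b))) y * (cmod (ebasis N A iota b (sinv (bgam b) y)))\<^sup>2
      = (\<Sum>k\<in>{1..d}. (ak \<nu> j k)\<^sup>2 * indicator (Ck \<nu> k) y)" for y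
  proof (cases "\<exists>k0\<in>{1..d}. y \<in> Ck \<nu> k0")
    case True
    then obtain k0 where k0: "k0 \<in> {1..d}" "y \<in> Ck \<nu> k0" by blast
    have yb: "y \<in> cyl N A \<beta>" using k0 Ck_sub[of \<nu> k0] nb by blast
    have "sinv \<gamma> y \<in> Gg N A \<gamma>" using sinv_Gg[OF g] yb ab by simp
    hence "ebasis N A iota b (sinv (bgam b) y) = complex_of_real (ak \<nu> j k0)"
      using eb_Eh[OF bb] Eh hh_at[OF _ _ k0] bh by (simp add: bgam_def)
    moreover have "(\<Sum>k\<in>{1..d}. (ak \<nu> j k)\<^sup>2 * indicator (Ck \<nu> k) y) = (\<Sum>k\<in>{1..d}. if k = k0 then (ak \<nu> j k)\<^sup>2 else 0)"
      by (intro sum.cong) (use Ck_disj[OF _ _ k0] bh in auto)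
    ultimately show ?thesis using yb k0 Eh ab by (simp add: bgam_def)
  next
    case False
    have s0: "(\<Sum>k\<in>{1..d}. (ak \<nu> j k)\<^sup>2 * indicator (Ck \<nu> k) y) = 0"
      by (intro sum.neutral) (use False in auto)
    have "hh \<nu> j y = 0" unfolding hh_def by (intro sum.neutral) (use False in auto)
    hence "indicator (cyl N A \<beta>) y * (cmod (ebasis N A iota b (sinv \<gamma> y)))\<^sup>2 = 0"
      using eb_Eh[OF bb] Eh by (cases "y \<in> cyl N A \<beta>") auto
    thus ?thesis using s0 Eh ab by (simp add: bgam_def)
  qed
  have "has_bochner_integral mu (\<lambda>y. \<Sum>k\<in>{1..d}. (ak \<nu> j k)\<^sup>2 * indicator (Ck \<nu> k) y)
       (\<Sum>k\<in>{1..d}. (ak \<nu> j k)\<^sup>2 * measure mu (Ck \<nu> k))"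
    unfolding Ck_def by (intro has_bochner_integral_sum has_bochner_integral_mult_right HB_cyl)
  moreover have "(\<Sum>k\<in>{1..d}. (ak \<nu> j k)\<^sup>2 * measure mu (Ck \<nu> k)) = 1"
    using ak_sq[of j \<nu>] measure_Ck bh mc by simp
  ultimately show ?thesis unfolding pt by simp
qed

lemma rho_Pw:
  assumes b: "enum m \<in> bidx_set N A"
  shows "rho N A iota enum m (wordact N A (Pw i)) = (if FL (bgam (enum m)) = i then 1 else 0)"
proof -
  define b where "b = enum m"
  define e where "e = ebasis N A iota b"
  define \<gamma>0 where "\<gamma>0 = bgam b"
  define c :: complex where "c = (if FL \<gamma>0 = i then 1 else 0)"
  have bb: "b \<in> bidx_set N A" using b b_def by simp
  have g0: "\<gamma>0 \<in> IA N A" using bgam_IA[OF bb] \<gamma>0_def by simp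
  have inner: "(\<integral>y. indicator (cyl N A (snd \<gamma>)) y * (cnj (e (sinv \<gamma> y)) * wordact N A (Pw i) e (sinv \<gamma> y)) \<partial>mu)
      = (if \<gamma> = \<gamma>0 then c else 0)" if g: "\<gamma> \<in> IA N A" for \<gamma>
  proof -
    have pt: "indicator (cyl N A (snd \<gamma>)) y * (cnj (e (sinv \<gamma> y)) * wordact N A (Pw i) e (sinv \<gamma> y))
       = (if FL \<gamma> = i then 1 else 0) * complex_of_real (indicator (cyl N A (snd \<gamma>)) y * (cmod (e (sinv \<gamma> y)))\<^sup>2)" for y
    proof (cases "y \<in> cyl N A (snd \<gamma>)")
      case True
      have sq: "cnj z * z = complex_of_real ((cmod z)\<^sup>2)" for z by (metis complex_norm_square mult.commute)
      show ?thesis using True Pw_sinv[OF g True] sq[of "e (sinv \<gamma> y)"] by (simp del: of_real_power)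
    qed simp
    have int: "(\<integral>y. (if FL \<gamma> = i then 1 else 0) * complex_of_real (indicator (cyl N A (snd \<gamma>)) y * (cmod (e (sinv \<gamma> y)))\<^sup>2) \<partial>mu)
      = (if FL \<gamma> = i then 1 else 0) * complex_of_real (\<integral>y. indicator (cyl N A (snd \<gamma>)) y * (cmod (e (sinv \<gamma> y)))\<^sup>2 \<partial>mu)"
      by (simp only: integral_mult_right_zero integral_complex_of_real)
    show ?thesis
    proof (cases "\<gamma> = \<gamma>0")
      case True
      have "(\<integral>y. indicator (cyl N A (snd \<gamma>)) y * (cmod (e (sinv \<gamma> y)))\<^sup>2 \<partial>mu) = 1"
        using NRM[OF bb] True e_def \<gamma>0_def has_bochner_integral_integral_eq by blast
      thus ?thesis unfolding pt int using True c_def by simp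
    next
      case False
      have "e (sinv \<gamma> y) = 0" if y: "y \<in> cyl N A (snd \<gamma>)" for y
      proof -
        have "sinv \<gamma> y \<in> Gg N A \<gamma>" using sinv_Gg[OF g y] .
        hence "sinv \<gamma> y \<notin> Gg N A (bgam b)" using Gg_unique[OF _ _ g bgam_IA[OF bb]] False \<gamma>0_def by blast
        thus ?thesis unfolding e_def by (rule eb_out)
      qed
      hence z: "indicator (cyl N A (snd \<gamma>)) y * (cmod (e (sinv \<gamma> y)))\<^sup>2 = 0" for y
        by (cases "y \<in> cyl N A (snd \<gamma>)") auto
      have "(\<integral>y. indicator (cyl N A (snd \<gamma>)) y * (cmod (e (sinv \<gamma> y)))\<^sup>2 \<partial>mu) = (\<integral>y. 0 \<partial>mu)"
        by (rule Bochner_Integration.integral_cong[OF refl]) (rule z)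
      hence "(\<integral>y. indicator (cyl N A (snd \<gamma>)) y * (cmod (e (sinv \<gamma> y)))\<^sup>2 \<partial>mu) = 0" by simp
      thus ?thesis unfolding pt int using False by simp
    qed
  qed
  have "rho N A iota enum m (wordact N A (Pw i)) =
     (\<integral>\<gamma>. (\<integral>y. indicator (cyl N A (snd \<gamma>)) y * (cnj (e (sinv \<gamma> y)) * wordact N A (Pw i) e (sinv \<gamma> y)) \<partial>mu) \<partial>count_space (IA N A))"
    by (simp add: rho_def inner_G_def e_def b_def)
  also have "\<dots> = (\<integral>\<gamma>. indicator {\<gamma>0} \<gamma> *\<^sub>R c \<partial>count_space (IA N A))"
    by (rule Bochner_Integration.integral_cong[OF refl]) (use inner in auto)
  also have "\<dots> = measure (count_space (IA N A)) {\<gamma>0} *\<^sub>R c"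
    by (rule has_bochner_integral_integral_eq[OF has_bochner_integral_indicator]) (use g0 in auto)
  also have "\<dots> = c" using g0 by (simp add: measure_count_space)
  finally show ?thesis by (simp add: c_def \<gamma>0_def b_def)
qed

end


context regA begin

lemma card_Sigma_img:
  assumes "inj_on f (Sigma S F)" "finite S" "\<And>x. x \<in> S \<Longrightarrow> finite (F x)"
  shows "card (f ` Sigma S F) = (\<Sum>x\<in>S. card (F x))"
  using assms by (simp add: card_image)

lemma card_Pset': "c < N \<Longrightarrow> card {a. a < N \<and> A a c = 1} = d"
  using card_Pset by (simp add: Pset_def)

lemma card_Cset': "c < N \<Longrightarrow> card {a. a < N \<and> A c a = 1} = d"
  using card_Cset by (simp add: Cset_def)

lemma fin_words: "finite {w. adm N A w \<and> length w = n}"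
proof -
  have "{w. adm N A w \<and> length w = n} \<subseteq> {w. set w \<subseteq> {..<N} \<and> length w = n}"
    by (auto simp: adm_succ)
  thus ?thesis using finite_lists_length_eq[of "{..<N}" n] finite_subset by blast
qed

lemma fin_words_P: "finite {w. adm N A w \<and> length w = n \<and> P w}"
  by (rule finite_subset[OF _ fin_words[of n]]) auto

lemma card_last: "e < N \<Longrightarrow> card {w. adm N A w \<and> length w = Suc n \<and> last w = e} = d ^ n"
proof (induction n arbitrary: e)
  case 0
  have "{w. adm N A w \<and> length w = Suc 0 \<and> last w = e} = {[e]}"
    using 0 by (auto simp: length_Suc_conv adm_def)
  thus ?case by simp
next
  case (Suc n)
  let ?S = "{w. adm N A w \<and> length w = Suc n \<and> last w = e}"
  have eq: "{w. adm N A w \<and> length w = Suc (Suc n) \<and> last w = e} =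
      (\<lambda>(w, a). a # w) ` Sigma ?S (\<lambda>w. {a. a < N \<and> A a (hd w) = 1})"
  proof (intro equalityI subsetI)
    fix w assume "w \<in> {w. adm N A w \<and> length w = Suc (Suc n) \<and> last w = e}"
    hence w: "adm N A w" "length w = Suc (Suc n)" "last w = e" by auto
    obtain a w' where aw: "w = a # w'" using w(2) by (cases w) auto
    have "w' \<noteq> []" using w(2) aw by auto
    note aw = aw this
    have "adm N A w'" "a < N" "A a (hd w') = 1" using w(1) aw by (auto simp: adm_Cons)
    moreover have "length w' = Suc n" "last w' = e" using w aw by auto
    ultimately show "w \<in> (\<lambda>(w, a). a # w) ` Sigma ?S (\<lambda>w. {a. a < N \<and> A a (hd w) = 1})"
      using aw by (intro image_eqI[of _ _ "(w', a)"]) auto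
  next
    fix z assume "z \<in> (\<lambda>(w, a). a # w) ` Sigma ?S (\<lambda>w. {a. a < N \<and> A a (hd w) = 1})"
    then obtain w a where z: "z = a # w" "w \<in> ?S" "a \<in> {a. a < N \<and> A a (hd w) = 1}" by auto
    thus "z \<in> {w. adm N A w \<and> length w = Suc (Suc n) \<and> last w = e}"
      by (auto simp: adm_Cons)
  qed
  have "card (Sigma ?S (\<lambda>w. {a. a < N \<and> A a (hd w) = 1})) = (\<Sum>w\<in>?S. card {a. a < N \<and> A a (hd w) = 1})"
    by (rule card_SigmaI) (auto intro: fin_words_P)
  also have "\<dots> = (\<Sum>w\<in>?S. d)"
  proof (rule sum.cong[OF refl])
    fix w assume "w \<in> ?S"
    hence "hd w < N" using adm_nth_lt[of w 0] by (cases w) auto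
    thus "card {a. a < N \<and> A a (hd w) = 1} = d" by (rule card_Pset')
  qed
  also have "\<dots> = d * d ^ n" using Suc by simp
  finally have c: "card (Sigma ?S (\<lambda>w. {a. a < N \<and> A a (hd w) = 1})) = d ^ Suc n" by simp
  have "inj_on (\<lambda>(w, a). a # w) (Sigma ?S (\<lambda>w. {a. a < N \<and> A a (hd w) = 1}))"
    by (auto simp: inj_on_def)
  hence "card ((\<lambda>(w, a). a # w) ` Sigma ?S (\<lambda>w. {a. a < N \<and> A a (hd w) = 1})) = d ^ Suc n"
    using c by (simp add: card_image)
  thus ?case unfolding eq .
qed

lemma card_hd: "i < N \<Longrightarrow> card {w. adm N A w \<and> length w = Suc n \<and> hd w = i} = d ^ n"
proof (induction n)
  case 0
  have "{w. adm N A w \<and> length w = Suc 0 \<and> hd w = i} = {[i]}"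
    using 0 by (auto simp: length_Suc_conv adm_def)
  thus ?case by simp
next
  case (Suc n)
  let ?S = "{w. adm N A w \<and> length w = Suc n \<and> hd w = i}"
  have eq: "{w. adm N A w \<and> length w = Suc (Suc n) \<and> hd w = i} =
      (\<lambda>(w, c). w @ [c]) ` Sigma ?S (\<lambda>w. {c. c < N \<and> A (last w) c = 1})"
  proof (intro equalityI subsetI)
    fix w assume "w \<in> {w. adm N A w \<and> length w = Suc (Suc n) \<and> hd w = i}"
    hence w: "adm N A w" "length w = Suc (Suc n)" "hd w = i" by auto
    define w' c where "w' = butlast w" and "c = last w"
    have ne: "w \<noteq> []" using w(2) by auto
    have l': "length w' = Suc n" using w(2) by (simp add: w'_def)
    have aw1: "w = w' @ [c]" using ne by (simp add: w'_def c_def)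
    have "w' \<noteq> []" using l' by auto
    note aw = aw1 this
    have "adm N A w'" "c < N" "A (last w') c = 1" using w(1) aw by (auto simp: adm_append1)
    moreover have "length w' = Suc n" "hd w' = i" using w aw by auto
    ultimately show "w \<in> (\<lambda>(w, c). w @ [c]) ` Sigma ?S (\<lambda>w. {c. c < N \<and> A (last w) c = 1})"
      using aw by (intro image_eqI[of _ _ "(w', c)"]) auto
  next
    fix z assume "z \<in> (\<lambda>(w, c). w @ [c]) ` Sigma ?S (\<lambda>w. {c. c < N \<and> A (last w) c = 1})"
    then obtain w c where z: "z = w @ [c]" "w \<in> ?S" "c \<in> {c. c < N \<and> A (last w) c = 1}" by auto
    thus "z \<in> {w. adm N A w \<and> length w = Suc (Suc n) \<and> hd w = i}"
      by (auto simp: adm_append1 hd_append)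
  qed
  have "card (Sigma ?S (\<lambda>w. {c. c < N \<and> A (last w) c = 1})) = (\<Sum>w\<in>?S. card {c. c < N \<and> A (last w) c = 1})"
    by (rule card_SigmaI) (auto intro: fin_words_P)
  also have "\<dots> = (\<Sum>w\<in>?S. d)"
  proof (rule sum.cong[OF refl])
    fix w assume "w \<in> ?S"
    hence "last w < N" using adm_last_lt[of w] by (cases w) auto
    thus "card {c. c < N \<and> A (last w) c = 1} = d" by (rule card_Cset')
  qed
  also have "\<dots> = d * d ^ n" using Suc by simp
  finally have c: "card (Sigma ?S (\<lambda>w. {c. c < N \<and> A (last w) c = 1})) = d ^ Suc n" by simp
  have "inj_on (\<lambda>(w, c). w @ [c]) (Sigma ?S (\<lambda>w. {c. c < N \<and> A (last w) c = 1}))"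
    by (auto simp: inj_on_def)
  hence "card ((\<lambda>(w, c). w @ [c]) ` Sigma ?S (\<lambda>w. {c. c < N \<and> A (last w) c = 1})) = d ^ Suc n"
    using c by (simp add: card_image)
  thus ?case unfolding eq .
qed

lemma fin_ext: "finite {w. adm N A (\<nu> @ w) \<and> length w = n}"
proof -
  have "{w. adm N A (\<nu> @ w) \<and> length w = n} \<subseteq> {w. adm N A w \<and> length w = n}"
    by (auto simp: adm_append)
  thus ?thesis using fin_words finite_subset by blast
qed

lemma card_ext: assumes "adm N A \<nu>" "\<nu> \<noteq> []"
  shows "card {w. adm N A (\<nu> @ w) \<and> length w = n} = d ^ n"
proof (induction n)
  case 0
  have "{w. adm N A (\<nu> @ w) \<and> length w = 0} = {[]}" using assms by auto
  then show ?case by simp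
next
  case (Suc n)
  let ?S = "{w. adm N A (\<nu> @ w) \<and> length w = n}"
  have eq: "{w. adm N A (\<nu> @ w) \<and> length w = Suc n} =
      (\<lambda>(w, c). w @ [c]) ` Sigma ?S (\<lambda>w. {c. c < N \<and> A (last (\<nu> @ w)) c = 1})"
  proof (intro equalityI subsetI)
    fix w assume "w \<in> {w. adm N A (\<nu> @ w) \<and> length w = Suc n}"
    hence w: "adm N A (\<nu> @ w)" "length w = Suc n" by auto
    define w' c where "w' = butlast w" and "c = last w"
    have ne: "w \<noteq> []" using w(2) by auto
    have aw: "w = w' @ [c]" using ne by (auto simp: w'_def c_def)
    have "\<nu> @ w = (\<nu> @ w') @ [c]" using aw by simp
    hence "adm N A ((\<nu> @ w') @ [c])" using w(1) by simp
    hence "adm N A (\<nu> @ w')" "c < N" "A (last (\<nu> @ w')) c = 1" using assms(2)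
      unfolding adm_append1 by auto
    moreover have "length w' = n" using w aw by auto
    ultimately show "w \<in> (\<lambda>(w, c). w @ [c]) ` Sigma ?S (\<lambda>w. {c. c < N \<and> A (last (\<nu> @ w)) c = 1})"
      using aw by (intro image_eqI[of _ _ "(w', c)"]) auto
  next
    fix z assume "z \<in> (\<lambda>(w, c). w @ [c]) ` Sigma ?S (\<lambda>w. {c. c < N \<and> A (last (\<nu> @ w)) c = 1})"
    then obtain w c where z: "z = w @ [c]" "w \<in> ?S" "c \<in> {c. c < N \<and> A (last (\<nu> @ w)) c = 1}" by auto
    have "adm N A ((\<nu> @ w) @ [c])" using z(2,3) assms(2) unfolding adm_append1 by auto
    thus "z \<in> {w. adm N A (\<nu> @ w) \<and> length w = Suc n}" using z by simp
  qed
  have "card (Sigma ?S (\<lambda>w. {c. c < N \<and> A (last (\<nu> @ w)) c = 1})) = (\<Sum>w\<in>?S. card {c. c < N \<and> A (last (\<nu> @ w)) c = 1})"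
    by (rule card_SigmaI) (auto intro: fin_ext)
  also have "\<dots> = (\<Sum>w\<in>?S. d)"
  proof (rule sum.cong[OF refl])
    fix w assume "w \<in> ?S"
    hence "last (\<nu> @ w) < N" using adm_last_lt[of "\<nu> @ w"] assms by auto
    thus "card {c. c < N \<and> A (last (\<nu> @ w)) c = 1} = d" by (rule card_Cset')
  qed
  also have "\<dots> = d * d ^ n" using Suc by simp
  finally have c: "card (Sigma ?S (\<lambda>w. {c. c < N \<and> A (last (\<nu> @ w)) c = 1})) = d ^ Suc n" by simp
  have "inj_on (\<lambda>(w, c). w @ [c]) (Sigma ?S (\<lambda>w. {c. c < N \<and> A (last (\<nu> @ w)) c = 1}))"
    by (auto simp: inj_on_def)
  hence "card ((\<lambda>(w, c). w @ [c]) ` Sigma ?S (\<lambda>w. {c. c < N \<and> A (last (\<nu> @ w)) c = 1})) = d ^ Suc n"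
    using c by (simp add: card_image)
  thus ?case unfolding eq .
qed

end


context regA begin

definition Bset :: "nat \<Rightarrow> nat \<Rightarrow> nat list set" where
  "Bset K c = {\<beta>. adm N A \<beta> \<and> length \<beta> = K \<and> \<beta> \<noteq> [] \<and> A c (last \<beta>) = 1 \<and> (K = 1 \<or> c \<noteq> \<beta> ! (K - 2))}"

definition gK :: "nat \<Rightarrow> nat" where "gK K = (if K = 1 then d else d ^ (K - 1) * (d - 1))"

lemma fin_Bset: "finite (Bset K c)"
  by (rule finite_subset[OF _ fin_words[of K]]) (auto simp: Bset_def)

lemma card_last_in:
  assumes E: "E \<subseteq> {..<N}"
  shows "card {w. adm N A w \<and> length w = Suc m \<and> last w \<in> E} = card E * d ^ m"
proof -
  have fE: "finite E" using E finite_subset by blast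
  have eq: "{w. adm N A w \<and> length w = Suc m \<and> last w \<in> E} =
    (\<lambda>(e, w). w) ` Sigma E (\<lambda>e. {w. adm N A w \<and> length w = Suc m \<and> last w = e})" by auto
  have inj: "inj_on (\<lambda>(e, w). w) (Sigma E (\<lambda>e. {w. adm N A w \<and> length w = Suc m \<and> last w = e}))"
    by (auto simp: inj_on_def)
  have "card (Sigma E (\<lambda>e. {w. adm N A w \<and> length w = Suc m \<and> last w = e})) =
      (\<Sum>e\<in>E. card {w. adm N A w \<and> length w = Suc m \<and> last w = e})"
    using fE by (intro card_SigmaI) (auto intro: fin_words_P)
  also have "\<dots> = (\<Sum>e\<in>E. d ^ m)" using card_last E by (intro sum.cong) auto
  finally have "card (Sigma E (\<lambda>e. {w. adm N A w \<and> length w = Suc m \<and> last w = e})) = card E * d ^ m" by simp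
  thus ?thesis unfolding eq using inj by (simp add: card_image)
qed

lemma card_Bset: assumes c: "c < N" and K: "K \<ge> 1" shows "card (Bset K c) = gK K"
proof (cases "K = 1")
  case True
  have "Bset K c = (\<lambda>c'. [c']) ` {c'. c' < N \<and> A c c' = 1}"
    using True by (auto simp: Bset_def length_Suc_conv adm_def)
  moreover have "inj (\<lambda>c'::nat. [c'])" by (auto simp: inj_on_def)
  ultimately have "card (Bset K c) = card {c'. c' < N \<and> A c c' = 1}" by (simp add: card_image inj_on_def)
  thus ?thesis using card_Cset'[OF c] True by (simp add: gK_def)
next
  case False
  define m where "m = K - 2"
  have m: "K = Suc (Suc m)" using K False unfolding m_def by arith
  define F where "F c' = {w. adm N A w \<and> length w = Suc m \<and> last w \<in> Pset c' - {c}}" for c'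
  have eq: "Bset K c = (\<lambda>(c', w). w @ [c']) ` Sigma {c'. c' < N \<and> A c c' = 1} F"
  proof (intro equalityI subsetI)
    fix \<beta> assume "\<beta> \<in> Bset K c"
    hence b: "adm N A \<beta>" "length \<beta> = K" "A c (last \<beta>) = 1" "c \<noteq> \<beta> ! (K - 2)" using m by (auto simp: Bset_def)
    define w c' where "w = butlast \<beta>" and "c' = last \<beta>"
    have ne: "\<beta> \<noteq> []" using b(2) m by auto
    have bw: "\<beta> = w @ [c']" using ne by (simp add: w_def c'_def)
    have lw: "length w = Suc m" using b(2) m by (simp add: w_def)
    have wne: "w \<noteq> []" using lw by auto
    have "adm N A (w @ [c'])" using b(1) bw by simp
    hence aw: "adm N A w" "c' < N" "A (last w) c' = 1" using wne by (simp_all add: adm_append1)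
    have "\<beta> ! (K - 2) = last w" using bw lw m wne by (simp add: nth_append last_conv_nth)
    hence "last w \<in> Pset c' - {c}" using aw b(4) adm_last_lt[OF aw(1) wne] by (auto simp: Pset_def)
    hence "w \<in> F c'" using aw lw by (simp add: F_def)
    moreover have "c' \<in> {c'. c' < N \<and> A c c' = 1}" using aw b(3) c'_def by simp
    ultimately show "\<beta> \<in> (\<lambda>(c', w). w @ [c']) ` Sigma {c'. c' < N \<and> A c c' = 1} F"
      using bw by (intro image_eqI[of _ _ "(c', w)"]) auto
  next
    fix z assume "z \<in> (\<lambda>(c', w). w @ [c']) ` Sigma {c'. c' < N \<and> A c c' = 1} F"
    then obtain c' w where z: "z = w @ [c']" "c' < N" "A c c' = 1" "w \<in> F c'" by auto
    have w: "adm N A w" "length w = Suc m" "last w \<in> Pset c'" "last w \<noteq> c" using z(4) by (auto simp: F_def)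
    have wne: "w \<noteq> []" using w(2) by auto
    have "adm N A z" using z w wne by (simp add: adm_append1 Pset_def)
    moreover have "z ! (K - 2) = last w" using z(1) w(2) m wne by (simp add: nth_append last_conv_nth)
    ultimately show "z \<in> Bset K c" using z w m by (auto simp: Bset_def)
  qed
  have inj: "inj_on (\<lambda>(c', w). w @ [c']) (Sigma {c'. c' < N \<and> A c c' = 1} F)" by (auto simp: inj_on_def)
  have cF: "card (F c') = (d - 1) * d ^ m" if c': "c' \<in> {c'. c' < N \<and> A c c' = 1}" for c'
  proof -
    have "card (Pset c' - {c}) = d - 1" using c' card_Pset[of c'] c by (simp add: Pset_def)
    moreover have "Pset c' - {c} \<subseteq> {..<N}" by (auto simp: Pset_def)
    ultimately show ?thesis unfolding F_def using card_last_in[of "Pset c' - {c}" m] by simp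
  qed
  have "card (Sigma {c'. c' < N \<and> A c c' = 1} F) = (\<Sum>c'\<in>{c'. c' < N \<and> A c c' = 1}. (d - 1) * d ^ m)"
    using cF by (subst card_SigmaI) (auto simp: F_def intro!: fin_words_P)
  also have "\<dots> = d * ((d - 1) * d ^ m)" using card_Cset'[OF c] by simp
  finally have "card (Bset K c) = d * ((d - 1) * d ^ m)" unfolding eq using inj by (simp add: card_image)
  thus ?thesis using m by (simp add: gK_def mult_ac)
qed

end


context regL begin

definition key :: "bidx \<Rightarrow> nat \<times> nat \<times> nat" where
  "key b = (case b of Eg \<gamma> \<Rightarrow> (length (fst \<gamma>), length (snd \<gamma>), 0)
     | Eh \<gamma> \<nu> j \<Rightarrow> (length (fst \<gamma>), length (snd \<gamma>), Suc (length \<nu>)))"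

definition EgS :: "nat \<Rightarrow> nat \<Rightarrow> nat \<Rightarrow> (nat list \<times> nat list) set" where
  "EgS L K i = {\<gamma> \<in> IA N A. length (fst \<gamma>) = L \<and> length (snd \<gamma>) = K \<and> FL \<gamma> = i}"

definition cntEg :: "nat \<Rightarrow> nat \<Rightarrow> nat" where
  "cntEg L K = (if K = 0 then 0 else if L = 0 then d ^ (K - 1) else d ^ (L - 1) * gK K)"

lemma IA_iff: "(\<alpha>, \<beta>) \<in> IA N A \<longleftrightarrow> adm N A \<alpha> \<and> adm N A \<beta> \<and> \<beta> \<noteq> [] \<and>
   (\<alpha> = [] \<or> (A (last \<alpha>) (last \<beta>) = 1 \<and> (length \<beta> = 1 \<or> last \<alpha> \<noteq> \<beta> ! (length \<beta> - 2))))"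
  by (simp add: IA_def)

lemma fin_EgS: "finite (EgS L K i)"
proof -
  have "EgS L K i \<subseteq> {\<alpha>. adm N A \<alpha> \<and> length \<alpha> = L} \<times> {\<beta>. adm N A \<beta> \<and> length \<beta> = K}"
  proof
    fix \<gamma> assume g: "\<gamma> \<in> EgS L K i"
    obtain \<alpha> \<beta> where ab: "\<gamma> = (\<alpha>, \<beta>)" by (cases \<gamma>)
    have "(\<alpha>, \<beta>) \<in> IA N A" "length \<alpha> = L" "length \<beta> = K" using g ab by (simp_all add: EgS_def)
    thus "\<gamma> \<in> {\<alpha>. adm N A \<alpha> \<and> length \<alpha> = L} \<times> {\<beta>. adm N A \<beta> \<and> length \<beta> = K}"
      using ab by (simp add: IA_iff)
  qed
  thus ?thesis by (rule finite_subset[OF _ finite_cartesian_product[OF fin_words fin_words]])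
qed

lemma card_EgS: assumes i: "i < N" shows "card (EgS L K i) = cntEg L K"
proof (cases "K = 0")
  case True
  hence "EgS L K i = {}" by (auto simp: EgS_def IA_def)
  thus ?thesis using True by (simp add: cntEg_def)
next
  case K: False
  show ?thesis
  proof (cases "L = 0")
    case True
    have "EgS L K i = (\<lambda>\<beta>. ([], \<beta>)) ` {w. adm N A w \<and> length w = Suc (K - 1) \<and> last w = i}"
      using True K by (auto simp: EgS_def IA_def FL_def image_iff)
    moreover have "inj (\<lambda>\<beta>::nat list. ([]::nat list, \<beta>))" by (auto simp: inj_on_def)
    ultimately have c1: "card (EgS L K i) = card {w. adm N A w \<and> length w = Suc (K - 1) \<and> last w = i}"
      by (simp only: card_image inj_on_def) (simp add: inj_on_def card_image)
    have "card (EgS L K i) = d ^ (K - 1)" by (rule trans[OF c1 card_last[OF i]])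
    thus ?thesis using True K by (simp add: cntEg_def)
  next
    case L: False
    have eq: "EgS L K i = Sigma {w. adm N A w \<and> length w = Suc (L - 1) \<and> hd w = i} (\<lambda>\<alpha>. Bset K (last \<alpha>))"
    proof (intro equalityI subsetI)
      fix \<gamma> assume g: "\<gamma> \<in> EgS L K i"
      obtain \<alpha> \<beta> where ab: "\<gamma> = (\<alpha>, \<beta>)" by (cases \<gamma>)
      have ane: "\<alpha> \<noteq> []" using g ab L by (auto simp: EgS_def)
      have "hd \<alpha> = i" using g ab ane by (auto simp: EgS_def FL_def hd_conv_nth)
      thus "\<gamma> \<in> Sigma {w. adm N A w \<and> length w = Suc (L - 1) \<and> hd w = i} (\<lambda>\<alpha>. Bset K (last \<alpha>))"
        using g ab ane L by (auto simp: EgS_def IA_def Bset_def)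
    next
      fix \<gamma> assume g: "\<gamma> \<in> Sigma {w. adm N A w \<and> length w = Suc (L - 1) \<and> hd w = i} (\<lambda>\<alpha>. Bset K (last \<alpha>))"
      obtain \<alpha> \<beta> where ab: "\<gamma> = (\<alpha>, \<beta>)" by (cases \<gamma>)
      have ane: "\<alpha> \<noteq> []" using g ab by auto
      show "\<gamma> \<in> EgS L K i"
        using g ab ane L by (auto simp: EgS_def IA_def Bset_def FL_def hd_conv_nth)
    qed
    have "card (EgS L K i) = (\<Sum>\<alpha>\<in>{w. adm N A w \<and> length w = Suc (L - 1) \<and> hd w = i}. card (Bset K (last \<alpha>)))"
      unfolding eq by (rule card_SigmaI) (auto intro: fin_words_P fin_Bset)
    also have "\<dots> = (\<Sum>\<alpha>\<in>{w. adm N A w \<and> length w = Suc (L - 1) \<and> hd w = i}. gK K)"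
    proof (rule sum.cong[OF refl])
      fix \<alpha> assume "\<alpha> \<in> {w. adm N A w \<and> length w = Suc (L - 1) \<and> hd w = i}"
      hence "last \<alpha> < N" using adm_last_lt[of \<alpha>] by (cases \<alpha>) auto
      thus "card (Bset K (last \<alpha>)) = gK K" using card_Bset K by simp
    qed
    also have "\<dots> = d ^ (L - 1) * gK K" using card_hd[OF i] by simp
    finally show ?thesis using K L by (simp add: cntEg_def)
  qed
qed

definition Cl :: "nat \<times> nat \<times> nat \<Rightarrow> nat \<Rightarrow> bidx set" where
  "Cl t i = {b \<in> bidx_set N A. key b = t \<and> FL (bgam b) = i}"

definition cnt :: "nat \<times> nat \<times> nat \<Rightarrow> nat" where
  "cnt t = (case t of (L, K, 0) \<Rightarrow> cntEg L K
     | (L, K, Suc n) \<Rightarrow> (if K \<le> n then cntEg L K * (d ^ (n - K) * (d - 1)) else 0))"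

lemma Eh_mem: "Eh \<gamma> \<nu> j \<in> bidx_set N A \<longleftrightarrow>
   \<gamma> \<in> IA N A \<and> adm N A \<nu> \<and> (\<exists>w. \<nu> = snd \<gamma> @ w) \<and> 1 \<le> j \<and> j \<le> d - 1"
proof
  assume "Eh \<gamma> \<nu> j \<in> bidx_set N A" thus "\<gamma> \<in> IA N A \<and> adm N A \<nu> \<and> (\<exists>w. \<nu> = snd \<gamma> @ w) \<and> 1 \<le> j \<and> j \<le> d - 1"
    using bidx_Eh by blast
next
  assume a: "\<gamma> \<in> IA N A \<and> adm N A \<nu> \<and> (\<exists>w. \<nu> = snd \<gamma> @ w) \<and> 1 \<le> j \<and> j \<le> d - 1"
  have "snd \<gamma> \<noteq> []" using a by (auto simp: IA_def)
  hence ne: "\<nu> \<noteq> []" using a by auto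
  have "cc N A (last \<nu>) = d" using cc_eq adm_last_lt ne a by simp
  hence "Eh \<gamma> \<nu> j \<in> {Eh \<gamma> \<nu> j | \<gamma> \<nu> j. \<gamma> \<in> IA N A \<and> adm N A \<nu> \<and> (\<exists>w. \<nu> = snd \<gamma> @ w) \<and>
        cc N A (last \<nu>) \<ge> 2 \<and> 1 \<le> j \<and> j \<le> cc N A (last \<nu>) - 1}" using a d2 by blast
  thus "Eh \<gamma> \<nu> j \<in> bidx_set N A" unfolding bidx_set_def by (rule UnI2)
qed

lemma card_Cl: assumes i: "i < N" shows "card (Cl t i) = cnt t"
proof -
  obtain L K z where t: "t = (L, K, z)" by (cases t) auto
  show ?thesis
  proof (cases z)
    case 0
    have "Cl t i = Eg ` EgS L K i"
    proof (intro equalityI subsetI)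
      fix b assume "b \<in> Cl t i"
      then show "b \<in> Eg ` EgS L K i" using t 0
        by (cases b) (auto simp: Cl_def key_def EgS_def bgam_def bidx_Eg)
    next
      fix b assume "b \<in> Eg ` EgS L K i"
      then show "b \<in> Cl t i" using t 0 by (auto simp: Cl_def key_def EgS_def bgam_def bidx_Eg)
    qed
    moreover have "inj Eg" by (auto simp: inj_on_def)
    ultimately have "card (Cl t i) = card (EgS L K i)" by (simp add: card_image inj_on_def)
    thus ?thesis using card_EgS[OF i] t 0 by (simp add: cnt_def)
  next
    case (Suc n)
    show ?thesis
    proof (cases "K \<le> n")
      case False
      have "Cl t i = {}"
      proof (rule ccontr)
        assume "Cl t i \<noteq> {}"
        then obtain b where b: "b \<in> Cl t i" by auto
        then obtain \<gamma> \<nu> j where bh: "b = Eh \<gamma> \<nu> j" using t Suc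
          by (cases b) (auto simp: Cl_def key_def)
        have m: "Eh \<gamma> \<nu> j \<in> bidx_set N A" using b bh by (simp add: Cl_def)
        then obtain w where "\<nu> = snd \<gamma> @ w" using bidx_Eh[OF m] by blast
        thus False using b bh t Suc False by (auto simp: Cl_def key_def)
      qed
      thus ?thesis using t Suc False by (simp add: cnt_def)
    next
      case True
      define F :: "nat list \<times> nat list \<Rightarrow> (nat list \<times> nat) set" where "F \<gamma> = {w. adm N A (snd \<gamma> @ w) \<and> length w = n - K} \<times> {1..d - 1}" for \<gamma>
      have eq: "Cl t i = (\<lambda>(\<gamma>, w, j). Eh \<gamma> (snd \<gamma> @ w) j) ` Sigma (EgS L K i) F"
      proof (intro equalityI subsetI)
        fix b assume b: "b \<in> Cl t i"
        then obtain \<gamma> \<nu> j where bh: "b = Eh \<gamma> \<nu> j" using t Suc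
          by (cases b) (auto simp: Cl_def key_def)
        have m: "Eh \<gamma> \<nu> j \<in> bidx_set N A" using b bh by (simp add: Cl_def)
        then obtain w where w: "\<nu> = snd \<gamma> @ w" using bidx_Eh by blast
        have "\<gamma> \<in> EgS L K i" using b bh m bidx_Eh[OF m] t Suc by (auto simp: Cl_def key_def EgS_def bgam_def)
        moreover have "(w, j) \<in> F \<gamma>" using b bh m bidx_Eh[OF m] t Suc w by (auto simp: Cl_def key_def F_def)
        ultimately show "b \<in> (\<lambda>(\<gamma>, w, j). Eh \<gamma> (snd \<gamma> @ w) j) ` Sigma (EgS L K i) F"
          using bh w by (intro image_eqI[of _ _ "(\<gamma>, w, j)"]) auto
      next
        fix b assume "b \<in> (\<lambda>(\<gamma>, w, j). Eh \<gamma> (snd \<gamma> @ w) j) ` Sigma (EgS L K i) F"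
        then obtain \<gamma> w j where b: "b = Eh \<gamma> (snd \<gamma> @ w) j" "\<gamma> \<in> EgS L K i" "(w, j) \<in> F \<gamma>" by auto
        have "Eh \<gamma> (snd \<gamma> @ w) j \<in> bidx_set N A" using b by (auto simp: Eh_mem EgS_def F_def)
        thus "b \<in> Cl t i" using b t Suc True by (auto simp: Cl_def key_def EgS_def F_def bgam_def)
      qed
      have inj: "inj_on (\<lambda>(\<gamma>, w, j). Eh \<gamma> (snd \<gamma> @ w) j) (Sigma (EgS L K i) F)"
        by (auto simp: inj_on_def)
      have cF: "card (F \<gamma>) = d ^ (n - K) * (d - 1)" if g: "\<gamma> \<in> EgS L K i" for \<gamma>
      proof -
        have "adm N A (snd \<gamma>)" "snd \<gamma> \<noteq> []" using g by (auto simp: EgS_def IA_def)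
        thus ?thesis unfolding F_def using card_ext by (simp add: card_cartesian_product)
      qed
      have "card (Sigma (EgS L K i) F) = (\<Sum>\<gamma>\<in>EgS L K i. card (F \<gamma>))"
        by (rule card_SigmaI) (auto simp: F_def intro: fin_EgS fin_ext)
      also have "\<dots> = (\<Sum>\<gamma>\<in>EgS L K i. d ^ (n - K) * (d - 1))" using cF by (intro sum.cong) auto
      also have "\<dots> = cntEg L K * (d ^ (n - K) * (d - 1))" using card_EgS[OF i] by simp
      finally have "card (Cl t i) = cntEg L K * (d ^ (n - K) * (d - 1))" unfolding eq using inj by (simp add: card_image)
      thus ?thesis using t Suc True by (simp add: cnt_def)
    qed
  qed
qed

end


context regL begin

lemma EV_key:
  assumes "key b = key b'"
  shows "EV b = EV b'"
proof (cases b)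
  case (Eg \<gamma>)
  then obtain \<gamma>' where b': "b' = Eg \<gamma>'" using assms by (cases b') (auto simp: key_def)
  thus ?thesis using assms Eg by (simp add: key_def EV_def Lval_def)
next
  case (Eh \<gamma> \<nu> j)
  then obtain \<gamma>' \<nu>' j' where b': "b' = Eh \<gamma>' \<nu>' j'" using assms by (cases b') (auto simp: key_def)
  thus ?thesis using assms Eh by (simp add: key_def EV_def Lval_def evh_def)
qed

lemma FL_bgam_lt: "b \<in> bidx_set N A \<Longrightarrow> FL (bgam b) < N"
  using FL_lt bgam_IA by blast

lemma balance:
  assumes S: "S \<subseteq> bidx_set N A" "finite S"
    and cl: "\<And>b b'. b \<in> S \<Longrightarrow> b' \<in> bidx_set N A \<Longrightarrow> key b' = key b \<Longrightarrow> b' \<in> S"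
    and i: "i < N"
  shows "card {b \<in> S. FL (bgam b) = i} = (\<Sum>t\<in>key ` S. cnt t)"
proof -
  have eq: "{b \<in> S. FL (bgam b) = i} = (\<Union>t\<in>key ` S. Cl t i)"
  proof (intro equalityI subsetI)
    fix b assume "b \<in> {b \<in> S. FL (bgam b) = i}"
    thus "b \<in> (\<Union>t\<in>key ` S. Cl t i)" using S by (auto simp: Cl_def)
  next
    fix b assume "b \<in> (\<Union>t\<in>key ` S. Cl t i)"
    then obtain b0 where b0: "b0 \<in> S" "b \<in> Cl (key b0) i" by auto
    hence "b \<in> bidx_set N A" "key b = key b0" "FL (bgam b) = i" by (auto simp: Cl_def)
    thus "b \<in> {b \<in> S. FL (bgam b) = i}" using cl[OF b0(1)] by auto
  qed
  have sub: "t \<in> key ` S \<Longrightarrow> Cl t i \<subseteq> S" for t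
    using cl by (auto simp: Cl_def)
  have "card (\<Union>t\<in>key ` S. Cl t i) = (\<Sum>t\<in>key ` S. card (Cl t i))"
  proof (rule card_UN_disjoint)
    show "finite (key ` S)" using S by simp
    show "\<forall>t\<in>key ` S. finite (Cl t i)" using sub S(2) finite_subset by blast
    show "\<forall>t\<in>key ` S. \<forall>t'\<in>key ` S. t \<noteq> t' \<longrightarrow> Cl t i \<inter> Cl t' i = {}" by (auto simp: Cl_def)
  qed
  also have "\<dots> = (\<Sum>t\<in>key ` S. cnt t)" using card_Cl[OF i] by simp
  finally show ?thesis using eq by simp
qed

lemma balance2:
  assumes S: "S \<subseteq> bidx_set N A" "finite S"
    and cl: "\<And>b b'. b \<in> S \<Longrightarrow> b' \<in> bidx_set N A \<Longrightarrow> key b' = key b \<Longrightarrow> b' \<in> S"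
    and i: "i0 < N"
  shows "card S \<le> 2 * card {b \<in> S. FL (bgam b) \<noteq> i0}"
proof -
  define C where "C = (\<Sum>t\<in>key ` S. cnt t)"
  have ci: "i < N \<Longrightarrow> card {b \<in> S. FL (bgam b) = i} = C" for i using balance[OF S cl] C_def by simp
  have u: "S = (\<Union>i\<in>{..<N}. {b \<in> S. FL (bgam b) = i})" using S FL_bgam_lt by auto
  have "card (\<Union>i\<in>{..<N}. {b \<in> S. FL (bgam b) = i}) = (\<Sum>i\<in>{..<N}. card {b \<in> S. FL (bgam b) = i})"
    by (rule card_UN_disjoint) (use S(2) in auto)
  hence "card S = (\<Sum>i\<in>{..<N}. card {b \<in> S. FL (bgam b) = i})"
    using arg_cong[of _ _ card, OF u] by simp
  hence cS: "card S = N * C" using ci by simp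
  have u2: "S = {b \<in> S. FL (bgam b) = i0} \<union> {b \<in> S. FL (bgam b) \<noteq> i0}" by auto
  have "card ({b \<in> S. FL (bgam b) = i0} \<union> {b \<in> S. FL (bgam b) \<noteq> i0}) =
     card {b \<in> S. FL (bgam b) = i0} + card {b \<in> S. FL (bgam b) \<noteq> i0}"
    by (rule card_Un_disjoint) (use S(2) in auto)
  hence "card S = card {b \<in> S. FL (bgam b) = i0} + card {b \<in> S. FL (bgam b) \<noteq> i0}"
    using arg_cong[of _ _ card, OF u2] by simp
  hence X: "card {b \<in> S. FL (bgam b) \<noteq> i0} = N * C - C" using cS ci[OF i] by simp
  have "N * C - C = (N - 1) * C" by (simp add: diff_mult_distrib)
  moreover have "N * C \<le> (2 * (N - 1)) * C" using N2 by (intro mult_le_mono1) simp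
  ultimately show ?thesis using X cS by simp
qed

end


lemma conv01:
  fixes g :: "nat \<Rightarrow> complex"
  assumes "convergent g" "\<And>k. g k = 0 \<or> g k = 1" and KK: "\<forall>m\<ge>K. \<forall>n\<ge>K. dist (g m) (g n) < 1"
  shows "\<exists>c. \<forall>k\<ge>K. g k = c"
proof -
  have "g k = g K" if k: "k \<ge> K" for k
  proof (rule ccontr)
    assume ne: "g k \<noteq> g K"
    have "dist (g k) (g K) = 1" using ne assms(2)[of k] assms(2)[of K] by (auto simp: dist_norm)
    thus False using KK k by force
  qed
  thus ?thesis by blast
qed

lemma conv01':
  fixes g :: "nat \<Rightarrow> complex"
  assumes "convergent g" "\<And>k. g k = 0 \<or> g k = 1"
  shows "\<exists>c. eventually (\<lambda>k. g k = c) sequentially"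
proof -
  have "Cauchy g" using assms(1) by (rule convergent_Cauchy)
  then obtain K where K: "\<forall>m\<ge>K. \<forall>n\<ge>K. dist (g m) (g n) < 1" by (metis Cauchy_def zero_less_one)
  obtain c where "\<forall>k\<ge>K. g k = c" using conv01[OF assms K] by blast
  thus ?thesis unfolding eventually_sequentially by blast
qed

context regL begin

lemma blocks:
  assumes bij: "bij_betw enum UNIV (bidx_set N A)"
    and monoE: "\<And>n m. n \<le> m \<Longrightarrow> EV (enum n) \<le> EV (enum m)"
  shows "\<exists>Z\<ge>Z0. EV (enum Z) < EV (enum (Suc Z))"
proof (rule ccontr)
  assume "\<not> ?thesis"
  hence st: "Z \<ge> Z0 \<Longrightarrow> EV (enum (Suc Z)) = EV (enum Z)" for Z
    using monoE[of Z "Suc Z"] by force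
  have const: "n \<ge> Z0 \<Longrightarrow> EV (enum n) = EV (enum Z0)" for n
  proof (induction n rule: dec_induct)
    case (step n) thus ?case using st[of n] by simp
  qed simp
  have rng: "range enum = bidx_set N A" using bij by (simp add: bij_betw_def)
  have injE: "inj enum" using bij by (simp add: bij_betw_def)
  define pos where "pos b = inv enum b" for b
  have ep: "b \<in> bidx_set N A \<Longrightarrow> enum (pos b) = b" for b
    unfolding pos_def using rng by (metis f_inv_into_f)
  have fam: "\<exists>B. \<forall>m>B. EV (\<phi> m) = EV (enum Z0)" if inj: "inj \<phi>" and mem: "\<And>m. \<phi> m \<in> bidx_set N A"
    for \<phi> :: "nat \<Rightarrow> bidx"
  proof -
    have "inj (\<lambda>m. pos (\<phi> m))"
    proof (rule injI)
      fix a b assume "pos (\<phi> a) = pos (\<phi> b)"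
      hence "enum (pos (\<phi> a)) = enum (pos (\<phi> b))" by simp
      hence "\<phi> a = \<phi> b" using ep mem by simp
      thus "a = b" using inj by (simp add: inj_eq)
    qed
    hence "finite ((\<lambda>m. pos (\<phi> m)) -` {..<Z0})" by (intro finite_vimageI) auto
    then obtain B where B: "\<forall>m\<in>(\<lambda>m. pos (\<phi> m)) -` {..<Z0}. m \<le> B"
      using finite_nat_set_iff_bounded_le by blast
    have "EV (\<phi> m) = EV (enum Z0)" if m: "m > B" for m
    proof -
      have "pos (\<phi> m) \<ge> Z0"
      proof (rule ccontr)
        assume "\<not> pos (\<phi> m) \<ge> Z0"
        hence "m \<in> (\<lambda>m. pos (\<phi> m)) -` {..<Z0}" by simp
        hence "m \<le> B" using B by blast
        thus False using m by simp
      qed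
      hence "EV (enum (pos (\<phi> m))) = EV (enum Z0)" by (rule const)
      thus ?thesis using ep mem by simp
    qed
    thus ?thesis by blast
  qed
  have N0: "0 < N" using Nge1 by simp
  have admt: "adm N A (map (traj 0) [0..<n])" for n using adm_map[OF traj_OmegaA[OF N0]] .
  define c where "c = ln (lamA N A) / tc N A"
  define \<phi>1 where "\<phi>1 K = Eg ([], map (traj 0) [0..<Suc K])" for K
  have inj1: "inj \<phi>1"
  proof (rule injI)
    fix x y assume "\<phi>1 x = \<phi>1 y"
    hence "map (traj 0) [0..<Suc x] = map (traj 0) [0..<Suc y]" by (simp only: \<phi>1_def bidx.inject prod.inject)
    hence "length (map (traj 0) [0..<Suc x]) = length (map (traj 0) [0..<Suc y])" by (rule arg_cong)
    thus "x = y" by (simp only: length_map length_upt diff_zero Suc_inject)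
  qed
  have mem1: "\<phi>1 K \<in> bidx_set N A" for K
    using admt[of "Suc K"] by (simp add: \<phi>1_def bidx_Eg IA_def)
  obtain B1 where B1: "\<forall>m>B1. EV (\<phi>1 m) = EV (enum Z0)" using fam[OF inj1 mem1] by blast
  have ev1: "EV (\<phi>1 K) = c * real (Suc K)" for K by (simp add: \<phi>1_def EV_def Lval_def c_def)
  have "c * real (Suc (Suc B1)) = c * real (Suc (Suc (Suc B1)))"
    using B1[rule_format, of "Suc B1"] B1[rule_format, of "Suc (Suc B1)"] ev1 by simp
  hence c0: "c = 0" by (simp add: algebra_simps)
  define \<phi>2 where "\<phi>2 m = Eh ([], [0]) (map (traj 0) [0..<Suc m]) 1" for m
  have inj2: "inj \<phi>2"
  proof (rule injI)
    fix x y assume "\<phi>2 x = \<phi>2 y"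
    hence "map (traj 0) [0..<Suc x] = map (traj 0) [0..<Suc y]" by (simp only: \<phi>2_def bidx.inject prod.inject)
    hence "length (map (traj 0) [0..<Suc x]) = length (map (traj 0) [0..<Suc y])" by (rule arg_cong)
    thus "x = y" by (simp only: length_map length_upt diff_zero Suc_inject)
  qed
  have mem2: "\<phi>2 m \<in> bidx_set N A" for m
  proof -
    have "map (traj 0) [0..<Suc m] = [0] @ map (traj 0) [1..<Suc m]" by (simp del: upt_Suc add: upt_conv_Cons)
    moreover have "([], [0]) \<in> IA N A" using N0 by (simp add: IA_def adm_def)
    ultimately show ?thesis using admt[of "Suc m"] d2 by (simp add: \<phi>2_def Eh_mem)
  qed
  obtain B2 where B2: "\<forall>m>B2. EV (\<phi>2 m) = EV (enum Z0)" using fam[OF inj2 mem2] by blast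
  have ev2: "EV (\<phi>2 m) = c * 1 + (real (Suc m) * (real d - 1) + 1) / real N" for m
    by (simp add: \<phi>2_def EV_def Lval_def c_def evh_def)
  have "(real (Suc (Suc B2)) * (real d - 1) + 1) / real N = (real (Suc (Suc (Suc B2))) * (real d - 1) + 1) / real N"
    using B2[rule_format, of "Suc B2"] B2[rule_format, of "Suc (Suc B2)"] ev2 c0 by simp
  hence "real (Suc (Suc B2)) * (real d - 1) = real (Suc (Suc (Suc B2))) * (real d - 1)" using N0 by simp
  hence "real d - 1 = 0" by (simp add: algebra_simps)
  thus False using d2 by simp
qed

end


context regL begin

lemma main:
  assumes bij: "bij_betw enum UNIV (bidx_set N A)"
    and mono: "mono (\<lambda>n. eigval N A lam iota (enum n))"
  shows "\<not> (\<exists>nk :: nat \<Rightarrow> nat. strict_mono nk \<and>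
             (\<lambda>M. real (card {k. nk k \<le> M}) / real M) \<longlonglongrightarrow> 1 \<and>
             (\<forall>T\<in>OA N A. convergent (\<lambda>k. rho N A iota enum (nk k) T)))"
proof
  assume "\<exists>nk :: nat \<Rightarrow> nat. strict_mono nk \<and>
             (\<lambda>M. real (card {k. nk k \<le> M}) / real M) \<longlonglongrightarrow> 1 \<and>
             (\<forall>T\<in>OA N A. convergent (\<lambda>k. rho N A iota enum (nk k) T))"
  then obtain nk :: "nat \<Rightarrow> nat" where sm: "strict_mono nk"
    and lim: "(\<lambda>M. real (card {k. nk k \<le> M}) / real M) \<longlonglongrightarrow> 1"
    and cv: "\<forall>T\<in>OA N A. convergent (\<lambda>k. rho N A iota enum (nk k) T)" by blast
  have mem: "enum n \<in> bidx_set N A" for n using bij bij_betwE by blast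
  have injE: "inj enum" using bij by (simp add: bij_betw_def)
  have monoE: "EV (enum n) \<le> EV (enum m)" if "n \<le> m" for n m
    using monoD[OF mono that] eigval_eq[OF mem] by simp
  define f where "f i k = rho N A iota enum (nk k) (wordact N A (Pw i))" for i k
  have fv: "f i k = (if FL (bgam (enum (nk k))) = i then 1 else 0)" for i k
    unfolding f_def by (rule rho_Pw[OF mem])
  have "\<exists>c. eventually (\<lambda>k. f i k = c) sequentially" for i
  proof (rule conv01')
    show "convergent (f i)" unfolding f_def using cv Pw_OA by blast
    show "f i k = 0 \<or> f i k = 1" for k using fv by simp
  qed
  then obtain cf where cf: "\<And>i. eventually (\<lambda>k. f i k = cf i) sequentially" by metis
  have "eventually (\<lambda>k. \<forall>i\<in>{..<N}. f i k = cf i) sequentially"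
    using cf by (simp add: eventually_ball_finite)
  then obtain K0 where K0: "\<And>k. k \<ge> K0 \<Longrightarrow> \<forall>i\<in>{..<N}. f i k = cf i"
    unfolding eventually_sequentially by blast
  define i0 where "i0 = FL (bgam (enum (nk K0)))"
  have i0N: "i0 < N" unfolding i0_def using FL_bgam_lt[OF mem] .
  have "cf i0 = 1" using K0[of K0] i0N fv[of i0 K0] i0_def by simp
  hence good: "FL (bgam (enum (nk k))) = i0" if "k \<ge> K0" for k
    using K0[OF that] i0N fv[of i0 k] by (auto split: if_splits)
  have "eventually (\<lambda>M. real (card {k. nk k \<le> M}) / real M > 3 / 4) sequentially"
    using lim by (rule order_tendstoD(1)) simp
  then obtain Z1 where Z1: "\<And>M. M \<ge> Z1 \<Longrightarrow> real (card {k. nk k \<le> M}) / real M > 3 / 4"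
    unfolding eventually_sequentially by blast
  obtain M where M: "M \<ge> max Z1 (4 * K0 + 2)" "EV (enum M) < EV (enum (Suc M))"
    using blocks[OF bij monoE] by blast
  define S where "S = enum ` {..M}"
  have S_eq: "S = {b \<in> bidx_set N A. EV b \<le> EV (enum M)}"
  proof (intro equalityI subsetI)
    fix b assume "b \<in> S" thus "b \<in> {b \<in> bidx_set N A. EV b \<le> EV (enum M)}"
      using mem monoE by (auto simp: S_def)
  next
    fix b assume b: "b \<in> {b \<in> bidx_set N A. EV b \<le> EV (enum M)}"
    then obtain n where n: "b = enum n" using bij by (auto simp: bij_betw_def)
    have "n \<le> M"
    proof (rule ccontr)
      assume "\<not> n \<le> M"
      hence "EV (enum (Suc M)) \<le> EV (enum n)" using monoE by simp
      thus False using b n M(2) by simp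
    qed
    thus "b \<in> S" using n by (simp add: S_def)
  qed
  have Ssub: "S \<subseteq> bidx_set N A" using S_eq by auto
  have Sfin: "finite S" by (simp add: S_def)
  have cl: "b' \<in> S" if "b \<in> S" "b' \<in> bidx_set N A" "key b' = key b" for b b'
    using that EV_key[OF that(3)] S_eq by auto
  have cardS: "card S = Suc M" unfolding S_def using injE by (simp add: card_image inj_on_def)
  define Bad where "Bad = {n. n \<le> M \<and> FL (bgam (enum n)) \<noteq> i0}"
  have "{b \<in> S. FL (bgam b) \<noteq> i0} = enum ` Bad" by (auto simp: S_def Bad_def)
  hence cB: "card {b \<in> S. FL (bgam b) \<noteq> i0} = card Bad" using injE by (simp add: card_image inj_on_def)
  have bal: "Suc M \<le> 2 * card Bad" using balance2[OF Ssub Sfin cl i0N] cardS cB by simp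
  have Bad_sub: "Bad \<subseteq> {..M}" by (auto simp: Bad_def)
  have fBad: "finite Bad" using Bad_sub finite_subset by blast
  have injnk: "inj nk" using sm by (rule strict_mono_imp_inj_on)
  have split: "{k. nk k \<le> M} \<subseteq> {..<K0} \<union> {k. K0 \<le> k \<and> nk k \<le> M}" by auto
  have img: "nk ` {k. K0 \<le> k \<and> nk k \<le> M} \<subseteq> {..M} - Bad" using good by (auto simp: Bad_def)
  have fin2: "finite {k. K0 \<le> k \<and> nk k \<le> M}"
  proof -
    have "{k. K0 \<le> k \<and> nk k \<le> M} \<subseteq> {..M}" using seq_suble[OF sm] by (auto intro: le_trans)
    thus ?thesis using finite_subset by blast
  qed
  have "card {k. K0 \<le> k \<and> nk k \<le> M} = card (nk ` {k. K0 \<le> k \<and> nk k \<le> M})"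
    using injnk by (simp add: card_image inj_on_def)
  also have "\<dots> \<le> card ({..M} - Bad)" using img by (intro card_mono) auto
  also have "\<dots> = Suc M - card Bad" using Bad_sub fBad by (simp add: card_Diff_subset)
  finally have c2: "card {k. K0 \<le> k \<and> nk k \<le> M} \<le> Suc M - card Bad" .
  have "card {k. nk k \<le> M} \<le> card ({..<K0} \<union> {k. K0 \<le> k \<and> nk k \<le> M})"
    using split fin2 by (intro card_mono) auto
  also have "\<dots> \<le> card {..<K0} + card {k. K0 \<le> k \<and> nk k \<le> M}" by (rule card_Un_le)
  finally have c3: "card {k. nk k \<le> M} \<le> K0 + (Suc M - card Bad)" using c2 by simp
  have "2 * card {k. nk k \<le> M} \<le> 2 * K0 + Suc M" using c3 bal by linarith
  hence le: "2 * real (card {k. nk k \<le> M}) \<le> 2 * real K0 + real M + 1" by linarith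
  have Mpos: "real M > 0" using M(1) by simp
  have "real (card {k. nk k \<le> M}) / real M > 3 / 4" using Z1 M(1) by simp
  hence "4 * real (card {k. nk k \<le> M}) > 3 * real M" using Mpos by (simp add: field_simps)
  hence "3 * real M < 4 * real K0 + 2 * real M + 2" using le by linarith
  hence "real M < 4 * real K0 + 2" by simp
  thus False using M(1) by linarith
qed

end

theorem proposition7p6:
  fixes N d :: nat and A :: "nat \<Rightarrow> nat \<Rightarrow> nat" and lam :: real
    and iota :: "nat list \<Rightarrow> nat \<Rightarrow> nat" and enum :: "nat \<Rightarrow> bidx"
  assumes "\<forall>i<N. \<forall>j<N. A i j \<in> {0, 1}"
    and "primitive N A"
    and "d \<ge> 2"
    and "\<forall>i<N. (\<Sum>j<N. A i j) = d"
    and "\<forall>j<N. (\<Sum>i<N. A i j) = d"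
    and "lam > 1"
    and "valid_iota N A iota"
    and "bij_betw enum UNIV (bidx_set N A)"
    and "mono (\<lambda>n. eigval N A lam iota (enum n))"
  shows "\<not> (\<exists>nk :: nat \<Rightarrow> nat. strict_mono nk \<and>
             (\<lambda>M. real (card {k. nk k \<le> M}) / real M) \<longlonglongrightarrow> 1 \<and>
             (\<forall>T\<in>OA N A. convergent (\<lambda>k. rho N A iota enum (nk k) T)))"
proof -
  interpret regL N d A lam iota
    by unfold_locales (use assms in auto)
  show ?thesis by (rule main[OF assms(8,9)])
qed


end
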